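(* Let $n_T,n_R,N_c$ be positive integers, $N_0>0$, $\mathcal{P}>0$, $\rho\in[0,1]$, and let $Q\in\mathbb{C}^{n_T\times n_T}$ be Hermitian positive definite with $\operatorname{tr}(Q)\le\mathcal{P}$, and $r\ge0$ with $I_{n_T}-rQ$ positive definite. Let $H=\Phi_R^{1/2}H_0\Phi_T^{1/2}$ with $\Phi_T,\Phi_R$ Hermitian positive definite and $H_0\in\mathbb{C}^{n_R\times n_T}$ having i.i.d. zero-mean unit-variance circularly symmetric complex Gaussian entries, with pdf $p_H$. Let $p_X(X)=\pi^{-n_TN_c}\det(Q)^{-N_c}\exp\operatorname{tr}(-Q^{-1}XX^\dagger)$ for $X\in\mathbb{C}^{n_T\times N_c}$, and $p(Y\mid X,H)=(\pi N_0)^{-n_RN_c}\exp\operatorname{tr}\{-\frac1{N_0}(Y-HX)(Y-HX)^\dagger\}$ for $Y\in\mathbb{C}^{n_R\times N_c}$. Define $$E_0=-\frac{1}{N_c}\ln\Big\{\int p_H(H)\int\Big(\int p_X(X)e^{r[\operatorname{tr}(XX^\dagger)-N_c\mathcal{P}]}p(Y\mid X,H)^{1/(1+\rho)}dX\Big)^{1+\rho}dY\,dH\Big\}.$$ Then $$E_0=r\mathcal{P}(1+\rho)+(1+\rho)\ln\det(I_{n_T}-rQ)-\frac1{N_c}\ln\mathbb{E}\Big\{\det\Big(I_{n_R}+\frac{H(Q^{-1}-rI_{n_T})^{-1}H^\dagger}{N_0(1+\rho)}\Big)^{-N_c\rho}\Big\}.$$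
   Context: Integrals over a complex matrix are with respect to Lebesgue measure $\prod d\Re X_{ij}\,d\Im X_{ij}$ on its entries; $\mathbb{E}$ is expectation over $H$. *)

theory Defs
  imports "HOL-Analysis.Analysis" "HOL-Probability.Probability"
begin

text \<open>Complex matrices are represented as elements of complex^'n^'m (m rows, n columns);
  the dimensions are the cardinalities of the finite index types. Lebesgue measure on
  the entries (product of d Re d Im) is lborel on this euclidean space.\<close>

definition cadj :: "complex^'n^'m \<Rightarrow> complex^'m^'n" where
  "cadj A = (\<chi> i j. cnj (A $ j $ i))"

definition hermitian :: "complex^'n^'n \<Rightarrow> bool" where
  "hermitian A \<longleftrightarrow> cadj A = A"

definition herm_pd :: "complex^'n^'n \<Rightarrow> bool" where
  "herm_pd A \<longleftrightarrow> hermitian A \<and>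
     (\<forall>x::complex^'n. x \<noteq> 0 \<longrightarrow> Re (\<Sum>i\<in>UNIV. \<Sum>j\<in>UNIV. cnj (x $ i) * A $ i $ j * x $ j) > 0)"

definition pd_sqrt :: "complex^'n^'n \<Rightarrow> complex^'n^'n" where
  "pd_sqrt A = (THE S. herm_pd S \<and> S ** S = A)"

definition H0_law :: "(complex^'t^'r) measure" where
  "H0_law = density lborel (\<lambda>H0. ennreal (pi powr (- real (CARD('r) * CARD('t)))
        * exp (- (\<Sum>i\<in>UNIV. \<Sum>j\<in>UNIV. (cmod (H0 $ i $ j))\<^sup>2))))"

text \<open>Law of H = Phi_R^(1/2) H0 Phi_T^(1/2); integrating against p_H is integrating w.r.t. this law.\<close>
definition H_law :: "complex^'r^'r \<Rightarrow> complex^'t^'t \<Rightarrow> (complex^'t^'r) measure" where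
  "H_law PhiR PhiT = distr H0_law lborel (\<lambda>H0. pd_sqrt PhiR ** H0 ** pd_sqrt PhiT)"

definition pX :: "complex^'t^'t \<Rightarrow> complex^'c^'t \<Rightarrow> real" where
  "pX Q X = pi powr (- real (CARD('t) * CARD('c))) * Re (det Q) powr (- real CARD('c))
      * exp (Re (trace (- (matrix_inv Q ** X ** cadj X))))"

definition pYXH :: "real \<Rightarrow> complex^'c^'r \<Rightarrow> complex^'c^'t \<Rightarrow> complex^'t^'r \<Rightarrow> real" where
  "pYXH N0 Y X H = (pi * N0) powr (- real (CARD('r) * CARD('c)))
      * exp (Re (trace (- ((1 / N0) *\<^sub>R ((Y - H ** X) ** cadj (Y - H ** X))))))"

definition E0 :: "real \<Rightarrow> real \<Rightarrow> real \<Rightarrow> real \<Rightarrow> complex^'t^'t \<Rightarrow> complex^'r^'r \<Rightarrow> complex^'t^'t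
                   \<Rightarrow> 'c::finite itself \<Rightarrow> real" where
  "E0 N0 P \<rho> r Q PhiR PhiT (_ :: 'c itself) =
     - (1 / real CARD('c)) * ln (
        integral\<^sup>L (H_law PhiR PhiT) (\<lambda>H.
          integral\<^sup>L lborel (\<lambda>Y :: complex^'c^'r.
            (integral\<^sup>L lborel (\<lambda>X :: complex^'c^'t.
               pX Q X * exp (r * (Re (trace (X ** cadj X)) - real CARD('c) * P))
                 * pYXH N0 Y X H powr (1 / (1 + \<rho>)))) powr (1 + \<rho>))))"

end

theory Submission
  imports Defs
begin

lemma lborel_coords:
  fixes \<phi> :: "('k::finite \<Rightarrow> 'a::euclidean_space) \<Rightarrow> 'b::euclidean_space"
    and \<beta> :: "'k \<times> 'a \<Rightarrow> 'b"
  assumes bij: "bij_betw \<beta> (UNIV \<times> Basis) Basis"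
    and inn: "\<And>f k a. a \<in> Basis \<Longrightarrow> \<phi> f \<bullet> \<beta> (k, a) = f k \<bullet> a"
  shows "distr (PiM UNIV (\<lambda>_. lborel)) borel \<phi> = lborel"
proof -
  interpret P: product_sigma_finite "\<lambda>_::'k. lborel::'a measure" by standard
  have phi_eq: "\<phi> f = (\<Sum>p\<in>UNIV \<times> Basis. (f (fst p) \<bullet> snd p) *\<^sub>R \<beta> p)" for f
  proof -
    have "\<phi> f = (\<Sum>b\<in>Basis. (\<phi> f \<bullet> b) *\<^sub>R b)" by (simp add: euclidean_representation)
    also have "\<dots> = (\<Sum>p\<in>UNIV \<times> Basis. (\<phi> f \<bullet> \<beta> p) *\<^sub>R \<beta> p)"
      using sum.reindex_bij_betw[OF bij, of "\<lambda>b. (\<phi> f \<bullet> b) *\<^sub>R b"] by simp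
    also have "\<dots> = (\<Sum>p\<in>UNIV \<times> Basis. (f (fst p) \<bullet> snd p) *\<^sub>R \<beta> p)"
      by (intro sum.cong refl) (auto simp: inn)
    finally show ?thesis .
  qed
  have meas: "\<phi> \<in> borel_measurable (PiM UNIV (\<lambda>_. lborel))"
    unfolding phi_eq[abs_def] by measurable
  define \<psi> where "\<psi> x k = (\<Sum>a\<in>Basis. (x \<bullet> \<beta> (k, a)) *\<^sub>R a)" for x k
  have psi_inn: "\<psi> x k \<bullet> a = x \<bullet> \<beta> (k, a)" if "a \<in> Basis" for x k a
    using that by (simp add: \<psi>_def inner_sum_left inner_Basis if_distrib cong: if_cong)
  have Bimg: "Basis = \<beta> ` (UNIV \<times> Basis)" using bij by (simp add: bij_betw_def)
  have bmem: "\<beta> (k, a) \<in> Basis" if "a \<in> Basis" for k a using bij that by (auto simp: bij_betw_def)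
  show ?thesis
  proof (rule lborel_eqI[symmetric])
    show "sets (distr (PiM UNIV (\<lambda>_. lborel)) borel \<phi>) = sets borel" by simp
    fix l u :: 'b assume lu: "\<And>b. b \<in> Basis \<Longrightarrow> l \<bullet> b \<le> u \<bullet> b"
    have pre: "\<phi> -` box l u \<inter> space (PiM UNIV (\<lambda>_. lborel)) = PiE UNIV (\<lambda>k. box (\<psi> l k) (\<psi> u k))"
    proof -
      have "f \<in> box l u \<longleftrightarrow> (\<forall>k. f' k \<in> box (\<psi> l k) (\<psi> u k))" if "f = \<phi> f'" for f f'
      proof -
        have "f \<in> box l u \<longleftrightarrow> (\<forall>p\<in>UNIV \<times> Basis. l \<bullet> \<beta> p < f \<bullet> \<beta> p \<and> f \<bullet> \<beta> p < u \<bullet> \<beta> p)"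
          unfolding mem_box by (subst Bimg) auto
        also have "\<dots> \<longleftrightarrow> (\<forall>k. f' k \<in> box (\<psi> l k) (\<psi> u k))"
          unfolding mem_box using that by (auto simp: psi_inn inn)
        finally show ?thesis .
      qed
      then show ?thesis by (auto simp: space_PiM PiE_def Pi_def extensional_def)
    qed
    have "emeasure (distr (PiM UNIV (\<lambda>_. lborel)) borel \<phi>) (box l u) = emeasure (PiM UNIV (\<lambda>_. lborel)) (PiE UNIV (\<lambda>k. box (\<psi> l k) (\<psi> u k)))"
      by (subst emeasure_distr[OF meas]) (simp_all add: pre)
    also have "\<dots> = (\<Prod>k\<in>UNIV. emeasure lborel (box (\<psi> l k) (\<psi> u k)))"
      by (rule P.emeasure_PiM) auto
    also have "\<dots> = (\<Prod>k\<in>UNIV. ennreal (\<Prod>a\<in>Basis. (u - l) \<bullet> \<beta> (k, a)))"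
      apply (intro prod.cong refl)
      apply (subst emeasure_lborel_box)
      using lu bmem by (auto simp: psi_inn inner_diff_left)
    also have "\<dots> = ennreal (\<Prod>k\<in>UNIV. \<Prod>a\<in>Basis. (u - l) \<bullet> \<beta> (k, a))"
      using lu bmem by (subst prod_ennreal) (auto intro!: prod_nonneg simp: inner_diff_left)
    also have "(\<Prod>k\<in>UNIV. \<Prod>a\<in>Basis. (u - l) \<bullet> \<beta> (k, a)) = (\<Prod>p\<in>UNIV \<times> Basis. (u - l) \<bullet> \<beta> p)"
      by (simp add: prod.cartesian_product)
    also have "\<dots> = (\<Prod>b\<in>Basis. (u - l) \<bullet> b)"
      using prod.reindex_bij_betw[OF bij, of "\<lambda>b. (u - l) \<bullet> b"] by simp
    finally show "emeasure (distr (PiM UNIV (\<lambda>_. lborel)) borel \<phi>) (box l u) = ennreal (\<Prod>b\<in>Basis. (u - l) \<bullet> b)" .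
  qed
qed
lemma lborel_vec:
  "distr (PiM UNIV (\<lambda>_::'n::finite. lborel)) borel (\<lambda>f. vec_lambda f) = (lborel :: ('a::euclidean_space^'n) measure)"
proof (rule lborel_coords[where \<beta>="\<lambda>(k,a). axis k a"])
  show "bij_betw (\<lambda>(k, a). axis k a) (UNIV \<times> Basis) (Basis :: ('a^'n) set)"
    unfolding bij_betw_def
  proof
    show "inj_on (\<lambda>(k, a). axis k a) (UNIV \<times> (Basis::'a set))"
      by (auto simp: inj_on_def axis_eq_axis nonzero_Basis)
    show "(\<lambda>(k, a). axis k a) ` (UNIV \<times> Basis) = (Basis :: ('a^'n) set)"
      by (auto simp: Basis_vec_def)
  qed
qed (simp add: inner_axis)

lemma ax_cols: "(\<chi> i'. axis j (axis i w $ i')) = axis i (axis j w)"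
  by (simp add: vec_eq_iff axis_def)

lemma inj_cols: "inj_on (\<lambda>(j::'c::finite,b::'a::euclidean_space^'t::finite). \<chi> i. axis j (b $ i)) (UNIV \<times> Basis)"
proof (rule inj_onI)
      fix p q :: "'c \<times> ('a^'t)"
      assume p: "p \<in> UNIV \<times> Basis" and q: "q \<in> UNIV \<times> Basis"
        and eq0: "(\<lambda>(j,b). \<chi> i. axis j (b $ i)) p = (\<lambda>(j,b). \<chi> i. axis j (b $ i)) q"
      obtain j b where pj: "p = (j, b)" by (cases p)
      obtain j' b' where qj: "q = (j', b')" by (cases q)
      have b: "b \<in> Basis" and b': "b' \<in> Basis" using p q pj qj by auto
      have eq: "(\<chi> i. axis j (b $ i)) = (\<chi> i. axis j' (b' $ i))" using eq0 pj qj by simp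
      from b obtain i w where bi: "b = axis i w" "w \<in> Basis" by (auto simp: Basis_vec_def)
      from b' obtain i' w' where bi': "b' = axis i' w'" "w' \<in> Basis" by (auto simp: Basis_vec_def)
      have e1: "(\<chi> i. axis j (b $ i)) = axis i (axis j w)" using bi ax_cols by simp
      have e2: "(\<chi> i. axis j' (b' $ i)) = axis i' (axis j' w')" using bi' ax_cols by simp
      from eq have "axis i (axis j w) = axis i' (axis j' w')" by (simp only: e1 e2)
      then show "p = q" using bi bi' pj qj by (auto simp: axis_eq_axis nonzero_Basis)
qed

lemma lborel_cols:
  "distr (PiM UNIV (\<lambda>_::'c::finite. lborel)) borel (\<lambda>f. \<chi> i j. f j $ i) = (lborel :: ('a::euclidean_space^'c^'t::finite) measure)"
proof (rule lborel_coords[where \<beta>="\<lambda>(j,b). \<chi> i. axis j (b $ i)"])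
  have ax: "(\<chi> i'. axis j (axis i w $ i')) = axis i (axis j w)" for i :: 't and j :: 'c and w :: 'a
    by (simp add: vec_eq_iff axis_def)
  show "bij_betw (\<lambda>(j,b). \<chi> i. axis j (b $ i)) (UNIV \<times> Basis) (Basis :: ('a^'c^'t) set)"
    unfolding bij_betw_def
  proof
    show "inj_on (\<lambda>(j,b). \<chi> i. axis j (b $ i)) (UNIV \<times> (Basis::('a^'t) set))"
      by (rule inj_cols)
    show "(\<lambda>(j,b). \<chi> i. axis j (b $ i)) ` (UNIV \<times> Basis) = (Basis :: ('a^'c^'t) set)"
    proof
      show "(\<lambda>(j,b). \<chi> i. axis j (b $ i)) ` (UNIV \<times> Basis) \<subseteq> (Basis :: ('a^'c^'t) set)"
      proof
        fix v :: "'a^'c^'t" assume "v \<in> (\<lambda>(j,b). \<chi> i. axis j (b $ i)) ` (UNIV \<times> (Basis :: ('a^'t) set))"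
        then obtain j and b :: "'a^'t" where jb: "v = (\<chi> i. axis j (b $ i))" "b \<in> Basis" by auto
        then obtain i w where bi: "b = axis i w" "w \<in> Basis" by (auto simp: Basis_vec_def)
        then have "v = axis i (axis j w)" using jb ax_cols by simp
        then show "v \<in> Basis" using bi by simp
      qed
      show "(Basis :: ('a^'c^'t) set) \<subseteq> (\<lambda>(j,b). \<chi> i. axis j (b $ i)) ` (UNIV \<times> Basis)"
      proof
        fix v :: "'a^'c^'t" assume "v \<in> Basis"
        then obtain i j w where v: "v = axis i (axis j w)" "w \<in> Basis" by (auto simp: Basis_vec_def)
        show "v \<in> (\<lambda>(j,b). \<chi> i. axis j (b $ i)) ` (UNIV \<times> Basis)"
          by (rule image_eqI[where x="(j, axis i w)"]) (use v in \<open>auto simp: ax_cols\<close>)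
      qed
    qed
  qed
  fix f :: "'c \<Rightarrow> 'a^'t" and k :: 'c and a :: "'a^'t"
  show "(\<chi> i j. f j $ i) \<bullet> (case (k, a) of (j, b) \<Rightarrow> \<chi> i. axis j (b $ i)) = f k \<bullet> a"
    by (simp add: inner_vec_def axis_def if_distrib[where f="\<lambda>z. _ \<bullet> z"] cong: if_cong)
qed

lemma borel_measurable_vec_nth[measurable]: "(\<lambda>x::'a::euclidean_space^'n::finite. x $ i) \<in> borel_measurable borel"
  by (intro borel_measurable_continuous_onI continuous_intros)

lemma borel_measurable_vec_lambda[measurable]:
  fixes f :: "'n::finite \<Rightarrow> 'b \<Rightarrow> 'a::euclidean_space"
  assumes "\<And>i. f i \<in> borel_measurable M"
  shows "(\<lambda>x. \<chi> i. f i x) \<in> borel_measurable M"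
proof (subst borel_measurable_euclidean_space, intro ballI)
  fix b :: "'a^'n" assume "b \<in> Basis"
  then obtain i a where b: "b = axis i a" "a \<in> Basis" by (auto simp: Basis_vec_def)
  have "(\<lambda>x. (\<chi> i. f i x) \<bullet> b) = (\<lambda>x. f i x \<bullet> a)" by (simp add: b inner_axis)
  then show "(\<lambda>x. (\<chi> i. f i x) \<bullet> b) \<in> borel_measurable M" using assms by simp
qed

lemma borel_measurable_axis[measurable]: "(\<lambda>x::'a::euclidean_space. axis k x :: 'a^'n::finite) \<in> borel_measurable borel"
  unfolding axis_def by measurable

lemma measurable_vec_lambda_PiM[measurable]:
  "(\<lambda>f. vec_lambda f :: 'a::euclidean_space^'n::finite) \<in> borel_measurable (PiM UNIV (\<lambda>_. lborel))"
proof -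
  have "(\<lambda>f. vec_lambda f :: 'a^'n) = (\<lambda>f. \<chi> i. f i)" by simp
  moreover have "(\<lambda>f. \<chi> i. (f::'n \<Rightarrow> 'a) i) \<in> borel_measurable (PiM UNIV (\<lambda>_. lborel))"
    by (intro borel_measurable_vec_lambda measurable_component_singleton[THEN measurable_compose[where g = id]]) auto
  ultimately show ?thesis by simp
qed

lemma nn_integral_lborel_vec:
  fixes g :: "'a::euclidean_space^'n::finite \<Rightarrow> ennreal"
  assumes [measurable]: "g \<in> borel_measurable borel"
  shows "(\<integral>\<^sup>+z. g z \<partial>lborel) = (\<integral>\<^sup>+w. g (vec_lambda w) \<partial>PiM UNIV (\<lambda>_. lborel))"
  by (subst lborel_vec[symmetric]) (simp add: nn_integral_distr)

lemma nn_integral_translate: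
  fixes h :: "'a::euclidean_space \<Rightarrow> ennreal"
  assumes [measurable]: "h \<in> borel_measurable borel"
  shows "(\<integral>\<^sup>+y. h (y + c) \<partial>lborel) = (\<integral>\<^sup>+y. h y \<partial>lborel)"
proof -
  have "(\<integral>\<^sup>+y. h y \<partial>lborel) = (\<integral>\<^sup>+y. h y \<partial>distr lborel borel ((+) c))"
    by (simp add: lborel_distr_plus)
  also have "\<dots> = (\<integral>\<^sup>+y. h (c + y) \<partial>lborel)" by (simp add: nn_integral_distr)
  finally show ?thesis by (simp add: add.commute)
qed

lemma shear_nn:
  fixes f :: "'a::euclidean_space^'n::finite \<Rightarrow> ennreal" and t :: "'a^'n \<Rightarrow> 'a" and k :: 'n
  assumes f[measurable]: "f \<in> borel_measurable borel" and t[measurable]: "t \<in> borel_measurable borel"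
    and tk: "\<And>z w. (\<And>j. j \<noteq> k \<Longrightarrow> z$j = w$j) \<Longrightarrow> t z = t w"
  shows "(\<integral>\<^sup>+z. f (z + axis k (t z)) \<partial>lborel) = (\<integral>\<^sup>+z. f z \<partial>lborel)"
proof -
  interpret P: product_sigma_finite "\<lambda>_::'n. lborel::'a measure" by standard
  define U where "U = UNIV - {k}"
  have UNIV_eq: "(UNIV::'n set) = insert k U" and kU: "k \<notin> U" and fU: "finite U" by (auto simp: U_def)
  have upd: "vec_lambda (x(k := y)) + axis k (t (vec_lambda (x(k := y)))) = vec_lambda (x(k := y + t (vec_lambda (x(k := 0)))))"
    for x :: "'n \<Rightarrow> 'a" and y
  proof -
    have "t (vec_lambda (x(k := y))) = t (vec_lambda (x(k := 0)))" by (rule tk) simp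
    then show ?thesis by (simp add: vec_eq_iff axis_def)
  qed
  have m1[measurable]: "(\<lambda>y. vec_lambda (x(k := y)) :: 'a^'n) \<in> borel_measurable borel" for x :: "'n \<Rightarrow> 'a"
  proof -
    have "(\<lambda>y. vec_lambda (x(k := y)) :: 'a^'n) = (\<lambda>y. \<chi> i. if i = k then y else x i)"
      by (simp add: fun_upd_def)
    then show ?thesis by simp
  qed
  have "(\<integral>\<^sup>+z. f (z + axis k (t z)) \<partial>lborel) = (\<integral>\<^sup>+w. f (vec_lambda w + axis k (t (vec_lambda w))) \<partial>PiM (insert k U) (\<lambda>_. lborel))"
    by (subst nn_integral_lborel_vec) (simp_all add: UNIV_eq[symmetric])
  also have "\<dots> = (\<integral>\<^sup>+x. (\<integral>\<^sup>+y. f (vec_lambda (x(k := y)) + axis k (t (vec_lambda (x(k := y))))) \<partial>lborel) \<partial>PiM U (\<lambda>_. lborel))"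
    by (rule P.product_nn_integral_insert[OF fU kU]) (simp add: UNIV_eq[symmetric])
  also have "\<dots> = (\<integral>\<^sup>+x. (\<integral>\<^sup>+y. f (vec_lambda (x(k := y))) \<partial>lborel) \<partial>PiM U (\<lambda>_. lborel))"
  proof (rule nn_integral_cong)
    fix x :: "'n \<Rightarrow> 'a"
    have "(\<integral>\<^sup>+y. f (vec_lambda (x(k := y)) + axis k (t (vec_lambda (x(k := y))))) \<partial>lborel)
       = (\<integral>\<^sup>+y. f (vec_lambda (x(k := y + t (vec_lambda (x(k := 0)))))) \<partial>lborel)"
      by (simp only: upd)
    also have "\<dots> = (\<integral>\<^sup>+y. f (vec_lambda (x(k := y))) \<partial>lborel)"
      by (rule nn_integral_translate[where h="\<lambda>y. f (vec_lambda (x(k := y)))"]) simp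
    finally show "(\<integral>\<^sup>+y. f (vec_lambda (x(k := y)) + axis k (t (vec_lambda (x(k := y))))) \<partial>lborel)
       = (\<integral>\<^sup>+y. f (vec_lambda (x(k := y))) \<partial>lborel)" .
  qed
  also have "\<dots> = (\<integral>\<^sup>+w. f (vec_lambda w) \<partial>PiM (insert k U) (\<lambda>_. lborel))"
    by (rule P.product_nn_integral_insert[OF fU kU, symmetric]) (simp add: UNIV_eq[symmetric])
  also have "\<dots> = (\<integral>\<^sup>+z. f z \<partial>lborel)"
    by (subst nn_integral_lborel_vec) (simp_all add: UNIV_eq[symmetric])
  finally have XX: "(\<integral>\<^sup>+z. f (z + axis k (t z)) \<partial>lborel) = (\<integral>\<^sup>+z. f z \<partial>lborel)" .
  then show ?thesis .
qed

lemma gauss_real_nn: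
  fixes d :: real assumes d: "d > 0"
  shows "(\<integral>\<^sup>+x. ennreal (exp (- d * x\<^sup>2)) \<partial>lborel) = ennreal (sqrt (pi / d))"
proof -
  define \<sigma> where "\<sigma> = sqrt (1 / (2 * d))"
  have s: "\<sigma> > 0" using d by (simp add: \<sigma>_def)
  have s2: "\<sigma>\<^sup>2 = 1 / (2 * d)" using d by (simp add: \<sigma>_def)
  have hb: "has_bochner_integral lborel (\<lambda>x. normal_density 0 \<sigma> x) 1"
    using normal_moment_even[OF s, of 0 0] by simp
  have eq: "exp (- d * x\<^sup>2) = sqrt (pi / d) * normal_density 0 \<sigma> x" for x
  proof -
    have e1: "sqrt (2 * pi * \<sigma>\<^sup>2) = sqrt (pi / d)" using d by (simp add: s2)
    have e2: "- (x - 0)\<^sup>2 / (2 * \<sigma>\<^sup>2) = - d * x\<^sup>2" using d by (simp add: s2 field_simps)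
    have "sqrt (pi / d) > 0" using d by simp
    then show ?thesis unfolding normal_density_def e1 e2 using d by simp
  qed
  have hb2: "has_bochner_integral lborel (\<lambda>x. exp (- d * x\<^sup>2)) (sqrt (pi / d))"
    unfolding eq using has_bochner_integral_mult_right[OF hb, of "sqrt (pi / d)"] by simp
  show ?thesis
    using nn_integral_eq_integral[of lborel "\<lambda>x. exp (- d * x\<^sup>2)"] hb2
    by (simp add: has_bochner_integral_iff)
qed

lemma gauss_complex_nn:
  fixes d :: real assumes d: "d > 0"
  shows "(\<integral>\<^sup>+z. ennreal (exp (- d * (cmod z)\<^sup>2)) \<partial>(lborel::complex measure)) = ennreal (pi / d)"
proof -
  have "(\<integral>\<^sup>+z. ennreal (exp (- d * (cmod z)\<^sup>2)) \<partial>(lborel::complex measure))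
      = (\<integral>\<^sup>+z. (\<Prod>b\<in>Basis. ennreal (exp (- d * (z \<bullet> b)\<^sup>2))) \<partial>(lborel::complex measure))"
  proof (intro nn_integral_cong)
    fix z :: complex
    have "(\<Prod>b\<in>Basis. ennreal (exp (- d * (z \<bullet> b)\<^sup>2))) = ennreal (exp (- d * (Re z)\<^sup>2)) * ennreal (exp (- d * (Im z)\<^sup>2))"
      by (simp add: Basis_complex_def)
    also have "\<dots> = ennreal (exp (- d * (cmod z)\<^sup>2))"
      by (simp add: ennreal_mult'[symmetric] exp_add[symmetric] cmod_power2 algebra_simps)
    finally show "ennreal (exp (- d * (cmod z)\<^sup>2)) = (\<Prod>b\<in>Basis. ennreal (exp (- d * (z \<bullet> b)\<^sup>2)))" by simp
  qed
  also have "\<dots> = (\<Prod>b\<in>(Basis::complex set). (\<integral>\<^sup>+x. ennreal (exp (- d * x\<^sup>2)) \<partial>lborel))"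
    by (rule nn_integral_lborel_prod) auto
  also have "\<dots> = ennreal (sqrt (pi / d)) * ennreal (sqrt (pi / d))"
    by (simp add: Basis_complex_def gauss_real_nn[OF d, simplified])
  also have "\<dots> = ennreal (pi / d)"
    using d by (simp add: ennreal_mult'[symmetric])
  finally show ?thesis .
qed

lemma gauss_norm_nn:
  "(\<integral>\<^sup>+x. ennreal (exp (- (norm x)\<^sup>2)) \<partial>(lborel::'a::euclidean_space measure)) = ennreal (sqrt pi ^ DIM('a))"
proof -
  have "(\<integral>\<^sup>+x. ennreal (exp (- (norm x)\<^sup>2)) \<partial>(lborel::'a measure))
      = (\<integral>\<^sup>+x. (\<Prod>b\<in>Basis. ennreal (exp (- 1 * (x \<bullet> b)\<^sup>2))) \<partial>(lborel::'a measure))"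
  proof (intro nn_integral_cong)
    fix x :: 'a
    have "(norm x)\<^sup>2 = (\<Sum>b\<in>Basis. (x \<bullet> b)\<^sup>2)"
      using power2_norm_eq_inner[of x] euclidean_inner[of x x] by (simp add: power2_eq_square)
    then show "ennreal (exp (- (norm x)\<^sup>2)) = (\<Prod>b\<in>Basis. ennreal (exp (- 1 * (x \<bullet> b)\<^sup>2)))"
      by (simp add: prod_ennreal exp_sum[symmetric] sum_negf)
  qed
  also have "\<dots> = (\<Prod>b\<in>(Basis::'a set). (\<integral>\<^sup>+x. ennreal (exp (- 1 * x\<^sup>2)) \<partial>lborel))"
    by (rule nn_integral_lborel_prod) auto
  also have "\<dots> = ennreal (sqrt pi ^ DIM('a))"
    using gauss_real_nn[of 1] by (simp add: prod_ennreal ennreal_power)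
  finally show ?thesis .
qed

lemma gauss_diag_nn:
  fixes d :: "'n::finite \<Rightarrow> real" assumes d: "\<And>i. d i > 0"
  shows "(\<integral>\<^sup>+z. ennreal (exp (- (\<Sum>i\<in>UNIV. d i * (cmod (z$i))\<^sup>2))) \<partial>(lborel::(complex^'n) measure)) = ennreal (\<Prod>i\<in>UNIV. pi / d i)"
proof -
  interpret P: product_sigma_finite "\<lambda>_::'n. lborel::complex measure" by standard
  have "(\<integral>\<^sup>+z. ennreal (exp (- (\<Sum>i\<in>UNIV. d i * (cmod (z$i))\<^sup>2))) \<partial>(lborel::(complex^'n) measure))
     = (\<integral>\<^sup>+w. ennreal (exp (- (\<Sum>i\<in>UNIV. d i * (cmod (vec_lambda w $ i))\<^sup>2))) \<partial>PiM UNIV (\<lambda>_. lborel))"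
    by (rule nn_integral_lborel_vec) measurable
  also have "\<dots> = (\<integral>\<^sup>+w. (\<Prod>i\<in>UNIV. ennreal (exp (- d i * (cmod (w i))\<^sup>2))) \<partial>PiM UNIV (\<lambda>_. lborel))"
    by (intro nn_integral_cong) (simp add: prod_ennreal exp_sum[symmetric] sum_negf)
  also have "\<dots> = (\<Prod>i\<in>UNIV. (\<integral>\<^sup>+z. ennreal (exp (- d i * (cmod z)\<^sup>2)) \<partial>(lborel::complex measure)))"
    by (rule P.product_nn_integral_prod) auto
  also have "\<dots> = ennreal (\<Prod>i\<in>UNIV. pi / d i)"
    using d by (simp add: gauss_complex_nn[OF d, simplified] prod_ennreal less_imp_le)
  finally show ?thesis .
qed

definition cdot :: "complex^'n::finite \<Rightarrow> complex^'n \<Rightarrow> complex" where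
  "cdot u v = (\<Sum>i\<in>UNIV. cnj (u$i) * v$i)"

definition qf :: "complex^'n::finite^'n \<Rightarrow> complex^'n \<Rightarrow> complex" where
  "qf M z = (\<Sum>i\<in>UNIV. \<Sum>j\<in>UNIV. cnj (z$i) * M$i$j * z$j)"

lemma herm_pd_qf: "herm_pd M \<longleftrightarrow> hermitian M \<and> (\<forall>x. x \<noteq> 0 \<longrightarrow> Re (qf M x) > 0)"
  by (simp add: herm_pd_def qf_def)

lemma qf_cdot: "qf M z = cdot z (M *v z)"
  by (simp add: qf_def cdot_def matrix_vector_mult_def sum_distrib_left mult.assoc)

lemma cadj_nth[simp]: "cadj A $ i $ j = cnj (A $ j $ i)"
  by (simp add: cadj_def)

lemma cadj_cadj[simp]: "cadj (cadj A) = A"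
  by (simp add: vec_eq_iff)

lemma cadj_mult: "cadj (A ** B) = cadj B ** cadj (A :: complex^'n::finite^'m::finite)"
  by (simp add: vec_eq_iff matrix_matrix_mult_def mult.commute)

lemma cadj_add: "cadj (A + B) = cadj A + cadj B"
  by (simp add: vec_eq_iff)

lemma cadj_diff: "cadj (A - B) = cadj A - cadj B"
  by (simp add: vec_eq_iff)

lemma cadj_scaleR: "cadj (r *\<^sub>R A) = r *\<^sub>R cadj A"
  by (simp add: vec_eq_iff)

lemma cadj_mat1[simp]: "cadj (mat 1 :: complex^'n^'n) = mat 1"
  by (simp add: vec_eq_iff mat_def)

lemma hermitian_entry: "hermitian M \<Longrightarrow> M$j$i = cnj (M$i$j)"
  unfolding hermitian_def by (metis cadj_nth complex_cnj_cnj)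

lemma hermitian_diag: "hermitian M \<Longrightarrow> M$i$i = complex_of_real (Re (M$i$i))"
  using hermitian_entry[of M i i] by (simp add: complex_eq_iff)

lemma cnj_cdot: "cnj (cdot u v) = cdot v u"
  by (simp add: cdot_def mult.commute)

lemma cdot_adj: "cdot u (A *v v) = cdot (cadj A *v u) v"
proof -
  have "cdot u (A *v v) = (\<Sum>i\<in>UNIV. \<Sum>j\<in>UNIV. cnj (u$i) * A$i$j * v$j)"
    by (simp add: cdot_def matrix_vector_mult_def sum_distrib_left mult.assoc)
  also have "\<dots> = (\<Sum>j\<in>UNIV. \<Sum>i\<in>UNIV. cnj (u$i) * A$i$j * v$j)"
    by (rule sum.swap)
  also have "\<dots> = cdot (cadj A *v u) v"
    by (simp add: cdot_def matrix_vector_mult_def sum_distrib_right sum_distrib_left mult.commute mult.left_commute)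
  finally show ?thesis .
qed

lemma cdot_add_right: "cdot u (v + w) = cdot u v + cdot u w"
  by (simp add: cdot_def distrib_left sum.distrib)
lemma cdot_add_left: "cdot (u + v) w = cdot u w + cdot v w"
  by (simp add: cdot_def distrib_right sum.distrib)
lemma cdot_diff_right: "cdot u (v - w) = cdot u v - cdot u w"
  by (simp add: cdot_def right_diff_distrib sum_subtractf)
lemma cdot_diff_left: "cdot (u - v) w = cdot u w - cdot v w"
  by (simp add: cdot_def left_diff_distrib sum_subtractf)
lemma vec_scaleR_nth: "(r *\<^sub>R (v::complex^'n::finite))$i = complex_of_real r * v$i"
  by (subst vector_scaleR_component) (rule scaleR_conv_of_real)
lemma cdot_scaleR_right: "cdot u (r *\<^sub>R v) = of_real r * cdot u v"
  by (simp only: cdot_def vec_scaleR_nth sum_distrib_left) (simp add: ac_simps)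
lemma cdot_scaleR_left: "cdot (r *\<^sub>R u) v = of_real r * cdot u v"
  by (simp only: cdot_def vec_scaleR_nth sum_distrib_left) (simp add: ac_simps)
lemma cdot_zero_left[simp]: "cdot 0 v = 0" by (simp add: cdot_def)
lemma cdot_zero_right[simp]: "cdot u 0 = 0" by (simp add: cdot_def)

lemma cdot_self: "cdot u u = complex_of_real ((norm u)\<^sup>2)"
proof -
  have e: "cnj z * z = complex_of_real ((cmod z)\<^sup>2)" for z
    by (metis complex_norm_square mult.commute)
  have "cdot u u = (\<Sum>i\<in>UNIV. complex_of_real ((cmod (u$i))\<^sup>2))"
    unfolding cdot_def by (rule sum.cong) (simp_all only: e)
  also have "\<dots> = complex_of_real ((norm u)\<^sup>2)"
    by (simp add: norm_vec_def L2_set_def sum_nonneg)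
  finally show ?thesis .
qed

lemma qf_adj_mult: "qf (cadj E ** N ** E) z = qf N (E *v z)"
  by (simp add: qf_cdot matrix_vector_mul_assoc[symmetric] cdot_adj)

lemma hermitian_qf_real: "hermitian M \<Longrightarrow> cnj (qf M z) = qf M z"
  unfolding qf_cdot hermitian_def
  by (metis cdot_adj cnj_cdot)

lemma qf_mat1: "qf (mat 1) z = complex_of_real ((norm z)\<^sup>2)"
  by (simp add: qf_cdot cdot_self)

lemma det_cadj: "det (cadj A) = cnj (det (A::complex^'n::finite^'n))"
proof -
  have "cadj A = transpose (\<chi> i j. cnj (A$i$j))"
    by (simp add: vec_eq_iff transpose_def)
  then have "det (cadj A) = det (\<chi> i j. cnj (A$i$j))" by (simp add: det_transpose)
  also have "\<dots> = cnj (det A)"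
    by (simp add: det_def)
  finally show ?thesis .
qed

lemma if_mult_simps:
  "(if P then a else 0) * (x::'a::semiring_0) = (if P then a * x else 0)"
  "x * (if P then a else 0) = (if P then x * a else 0)"
  "cnj (if P then z else w) = (if P then cnj z else cnj w)"
  by auto

definition shearm :: "'n::finite \<Rightarrow> complex^'n \<Rightarrow> complex^'n^'n" where
  "shearm k c = (\<chi> i j. (if i = j then 1 else 0) + (if i = k then c$j else 0))"

definition lsum :: "complex^'n::finite \<Rightarrow> complex^'n \<Rightarrow> complex" where
  "lsum c z = (\<Sum>j\<in>UNIV. c$j * z$j)"

lemma shearm_mulv: "shearm k c *v z = z + axis k (lsum c z)"
proof -
  have "(shearm k c *v z) $ i = (z + axis k (lsum c z)) $ i" for i
  proof -
    have "(shearm k c *v z) $ i = (\<Sum>j\<in>UNIV. (if i = j then z$j else 0) + (if i = k then c$j * z$j else 0))"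
      by (simp add: shearm_def matrix_vector_mult_def distrib_right if_mult_simps cong: if_cong)
    also have "\<dots> = z$i + (if i = k then lsum c z else 0)"
      by (simp add: sum.distrib lsum_def)
    finally show ?thesis by (simp add: axis_def)
  qed
  then show ?thesis by (simp add: vec_eq_iff)
qed

lemma mul_shearm_nth: "(X ** shearm k c)$a$j = X$a$j + X$a$k * c$j"
proof -
  have "(X ** shearm k c)$a$j = (\<Sum>b\<in>UNIV. (if b = j then X$a$b else 0) + (if b = k then X$a$b * c$j else 0))"
    by (simp add: shearm_def matrix_matrix_mult_def distrib_left if_mult_simps cong: if_cong)
  also have "\<dots> = X$a$j + X$a$k * c$j" by (simp add: sum.distrib)
  finally show ?thesis .
qed

lemma adj_shearm_mul_nth: "(cadj (shearm k c) ** X)$i$j = X$i$j + cnj (c$i) * X$k$j"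
proof -
  have "(cadj (shearm k c) ** X)$i$j = (\<Sum>b\<in>UNIV. (if b = i then X$b$j else 0) + (if b = k then cnj (c$i) * X$b$j else 0))"
    by (simp add: shearm_def matrix_matrix_mult_def distrib_right if_mult_simps cong: if_cong)
  also have "\<dots> = X$i$j + cnj (c$i) * X$k$j" by (simp add: sum.distrib)
  finally show ?thesis .
qed

lemma det_shearm:
  fixes c :: "complex^'n::finite"
  assumes ck: "c$k = 0"
  shows "det (shearm k c) = 1"
proof -
  let ?I = "mat 1 :: complex^'n^'n"
  have rowI: "row i ?I = axis i 1" for i :: 'n by (simp add: row_def mat_def axis_def vec_eq_iff)
  have sh: "shearm k c = (\<chi> i. if i = k then row k ?I + c else row i ?I)"
    by (simp add: vec_eq_iff shearm_def rowI axis_def)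
  have ceq: "c = (\<Sum>j\<in>UNIV - {k}. c$j *s row j ?I)"
  proof -
    have "(\<Sum>j\<in>UNIV - {k}. c$j *s row j ?I) $ i = c $ i" for i
      using ck by (cases "i = k") (simp_all add: rowI axis_def if_mult_simps)
    then show ?thesis by (simp add: vec_eq_iff)
  qed
  have "c \<in> vec.span {row j ?I |j. j \<noteq> k}"
    apply (subst ceq)
    apply (rule vec.span_sum)
    apply (rule vec.span_scale)
    apply (rule vec.span_base)
    by auto
  then have "det (\<chi> i. if i = k then row k ?I + c else row i ?I) = det ?I"
    using det_row_span[where A="?I" and x=c and i=k] by simp
  then show ?thesis using sh by simp
qed

lemma det_adj_shearm: "c$k = 0 \<Longrightarrow> det (cadj (shearm k c)) = 1"
  by (simp add: det_cadj det_shearm)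

lemma lsum_axis: "c$k = 0 \<Longrightarrow> lsum c (z + axis k w) = lsum c z"
  by (simp add: lsum_def axis_def distrib_left sum.distrib if_mult_simps)

lemma qf_axis1: "qf M (axis i 1) = M$i$i"
  by (simp add: qf_def axis_def if_mult_simps cong: if_cong)

lemma cont_qf[continuous_intros]: "continuous_on S (\<lambda>z. qf M z)"
  unfolding qf_def by (intro continuous_intros)

lemma meas_qf[measurable]: "(\<lambda>z. Re (qf M z)) \<in> borel_measurable borel"
  by (intro borel_measurable_continuous_onI continuous_intros)

lemma meas_lsum[measurable]: "(\<lambda>z. lsum c z) \<in> borel_measurable borel"
  unfolding lsum_def by (intro borel_measurable_continuous_onI continuous_intros)

lemma gauss_diag_case:
  fixes M :: "complex^'n::finite^'n"
  assumes pd: "herm_pd M" and dg: "\<And>i j. i \<noteq> j \<Longrightarrow> M$i$j = 0"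
  shows "\<exists>d>0. det M = complex_of_real d \<and> (\<integral>\<^sup>+z. ennreal (exp (- Re (qf M z))) \<partial>lborel) = ennreal (pi ^ CARD('n) / d)"
proof -
  have herm: "hermitian M" using pd by (simp add: herm_pd_def)
  define dd where "dd i = Re (M$i$i)" for i
  have dv: "M$i$i = complex_of_real (dd i)" for i using hermitian_diag[OF herm] by (simp add: dd_def)
  have pos: "dd i > 0" for i
  proof -
    have "axis i (1::complex) \<noteq> 0" by simp
    then have "Re (qf M (axis i 1)) > 0" using pd by (simp add: herm_pd_qf)
    then show ?thesis by (simp add: qf_axis1 dd_def)
  qed
  have qfz: "Re (qf M z) = (\<Sum>i\<in>UNIV. dd i * (cmod (z$i))\<^sup>2)" for z
  proof -
    have "qf M z = (\<Sum>i\<in>UNIV. cnj (z$i) * M$i$i * z$i)"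
      unfolding qf_def
    proof (rule sum.cong[OF refl])
      fix i
      have "(\<Sum>j\<in>UNIV. cnj (z$i) * M$i$j * z$j) = (\<Sum>j\<in>UNIV. if j = i then cnj (z$i) * M$i$i * z$i else 0)"
        by (rule sum.cong) (auto simp: dg)
      then show "(\<Sum>j\<in>UNIV. cnj (z$i) * M$i$j * z$j) = cnj (z$i) * M$i$i * z$i" by simp
    qed
    also have "\<dots> = (\<Sum>i\<in>UNIV. complex_of_real (dd i * (cmod (z$i))\<^sup>2))"
    proof (rule sum.cong[OF refl])
      fix i
      have "cnj (z$i) * z$i = complex_of_real ((cmod (z$i))\<^sup>2)"
        by (metis complex_norm_square mult.commute)
      then show "cnj (z$i) * M$i$i * z$i = complex_of_real (dd i * (cmod (z$i))\<^sup>2)"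
        by (simp add: dv mult.commute mult.left_commute)
    qed
    finally show ?thesis by simp
  qed
  have "det M = (\<Prod>i\<in>UNIV. M$i$i)" by (rule det_diagonal) (simp add: dg)
  also have "\<dots> = complex_of_real (\<Prod>i\<in>UNIV. dd i)" by (simp add: dv)
  finally have detM: "det M = complex_of_real (\<Prod>i\<in>UNIV. dd i)" .
  have "(\<integral>\<^sup>+z. ennreal (exp (- Re (qf M z))) \<partial>lborel) = (\<integral>\<^sup>+z. ennreal (exp (- (\<Sum>i\<in>UNIV. dd i * (cmod (z$i))\<^sup>2))) \<partial>lborel)"
    by (simp add: qfz)
  also have "\<dots> = ennreal (\<Prod>i\<in>UNIV. pi / dd i)" by (rule gauss_diag_nn) (rule pos)
  also have "(\<Prod>i\<in>UNIV. pi / dd i) = pi ^ CARD('n) / (\<Prod>i\<in>UNIV. dd i)"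
    by (simp add: prod_dividef)
  finally show ?thesis using detM pos by (intro exI[of _ "\<Prod>i\<in>UNIV. dd i"]) (auto intro: prod_pos)
qed

lemma gauss_step:
  fixes M :: "complex^'n::finite^'n" and k :: 'n and S :: "'n set"
  assumes pd: "herm_pd M"
    and IH: "\<And>N::complex^'n^'n. herm_pd N \<Longrightarrow> (\<forall>i j. i \<noteq> j \<and> (i \<notin> S \<or> j \<notin> S) \<longrightarrow> N$i$j = 0) \<Longrightarrow>
        \<exists>d>0. det N = complex_of_real d \<and> (\<integral>\<^sup>+z. ennreal (exp (- Re (qf N z))) \<partial>lborel) = ennreal (pi ^ CARD('n) / d)"
    and dg: "\<forall>i j. i \<noteq> j \<and> (i \<notin> insert k S \<or> j \<notin> insert k S) \<longrightarrow> M$i$j = 0"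
  shows "\<exists>d>0. det M = complex_of_real d \<and> (\<integral>\<^sup>+z. ennreal (exp (- Re (qf M z))) \<partial>lborel) = ennreal (pi ^ CARD('n) / d)"
proof -
  have herm: "hermitian M" using pd by (simp add: herm_pd_def)
  have hij: "cnj (M$i$j) = M$j$i" for i j using hermitian_entry[OF herm, of i j] by simp
  define a where "a = Re (M$k$k)"
  have Mkk: "M$k$k = complex_of_real a" using hermitian_diag[OF herm] by (simp add: a_def)
  have apos: "a > 0"
  proof -
    have "axis k (1::complex) \<noteq> 0" by simp
    then have "Re (qf M (axis k 1)) > 0" using pd by (simp add: herm_pd_qf)
    then show ?thesis by (simp add: qf_axis1 a_def)
  qed
  define c where "c = (\<chi> j. if j = k then 0 else M$k$j / complex_of_real a)"
  have ck: "c$k = 0" by (simp add: c_def)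
  define E where "E = shearm k c"
  define Mt where "Mt = (\<chi> i j. if i = k \<or> j = k then (if i = j then M$k$k else 0)
                                 else M$i$j - M$i$k * M$k$j / complex_of_real a)"
  have F1: "cadj E ** Mt ** E = M"
  proof -
    have "(cadj E ** Mt ** E)$i$j = M$i$j" for i j
    proof -
      have "(cadj E ** Mt ** E)$i$j = (Mt$i$j + cnj (c$i) * Mt$k$j) + (Mt$i$k + cnj (c$i) * Mt$k$k) * c$j"
        unfolding E_def mul_shearm_nth adj_shearm_mul_nth by simp
      also have "\<dots> = M$i$j"
        using apos
        by (cases "i = k"; cases "j = k") (simp_all add: Mt_def c_def Mkk hij field_simps)
      finally show ?thesis .
    qed
    then show ?thesis by (simp add: vec_eq_iff)
  qed
  have F2: "det M = det Mt"
  proof -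
    have "det M = det (cadj E) * det Mt * det E" by (simp add: F1[symmetric] det_mul)
    then show ?thesis by (simp add: E_def det_shearm det_adj_shearm ck)
  qed
  have F3: "E *v z = z + axis k (lsum c z)" for z by (simp add: E_def shearm_mulv)
  have F4: "qf Mt (E *v z) = qf M z" for z
    using qf_adj_mult[of E Mt z] by (simp add: F1)
  have hermt: "hermitian Mt"
  proof -
    have "cnj (Mt$j$i) = Mt$i$j" for i j
      using apos by (cases "i = k"; cases "j = k") (auto simp: Mt_def Mkk hij)
    then show ?thesis unfolding hermitian_def by (simp add: vec_eq_iff)
  qed
  have pdt: "herm_pd Mt"
    unfolding herm_pd_qf
  proof (intro conjI allI impI hermt)
    fix u :: "complex^'n" assume u: "u \<noteq> 0"
    define z where "z = u + axis k (- lsum c u)"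
    have "lsum c z = lsum c u" unfolding z_def by (rule lsum_axis[OF ck])
    then have Ez: "E *v z = u" by (simp add: F3 z_def axis_def vec_eq_iff)
    have "z \<noteq> 0" using Ez u by auto
    then have "Re (qf M z) > 0" using pd by (simp add: herm_pd_qf)
    then show "Re (qf Mt u) > 0" using F4[of z] Ez by simp
  qed
  have dgt: "\<forall>i j. i \<noteq> j \<and> (i \<notin> S \<or> j \<notin> S) \<longrightarrow> Mt$i$j = 0"
    using dg by (auto simp: Mt_def)
  obtain d where d: "d > 0" "det Mt = complex_of_real d"
      "(\<integral>\<^sup>+z. ennreal (exp (- Re (qf Mt z))) \<partial>lborel) = ennreal (pi ^ CARD('n) / d)"
    using IH[OF pdt dgt] by blast
  have "(\<integral>\<^sup>+z. ennreal (exp (- Re (qf M z))) \<partial>lborel) = (\<integral>\<^sup>+z. ennreal (exp (- Re (qf Mt (z + axis k (lsum c z))))) \<partial>lborel)"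
    by (simp add: F4[symmetric] F3)
  also have "\<dots> = (\<integral>\<^sup>+z. ennreal (exp (- Re (qf Mt z))) \<partial>lborel)"
  proof (rule shear_nn[where f="\<lambda>u. ennreal (exp (- Re (qf Mt u)))" and t="lsum c"])
    show "(\<lambda>u. ennreal (exp (- Re (qf Mt u)))) \<in> borel_measurable borel" by measurable
    show "lsum c \<in> borel_measurable borel" using meas_lsum[of c] by (simp add: eta_contract_eq)
    fix z w :: "complex^'n" assume zw: "\<And>j. j \<noteq> k \<Longrightarrow> z$j = w$j"
    show "lsum c z = lsum c w" unfolding lsum_def
      by (rule sum.cong[OF refl]) (metis ck zw mult_zero_left)
  qed
  finally show ?thesis using d F2 by auto
qed

lemma gauss_core:
  fixes M :: "complex^'n::finite^'n"
  assumes pd: "herm_pd M"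
  shows "\<exists>d>0. det M = complex_of_real d \<and> (\<integral>\<^sup>+z. ennreal (exp (- Re (qf M z))) \<partial>lborel) = ennreal (pi ^ CARD('n) / d)"
proof -
  have "finite S \<Longrightarrow> \<forall>N::complex^'n^'n. herm_pd N \<and> (\<forall>i j. i \<noteq> j \<and> (i \<notin> S \<or> j \<notin> S) \<longrightarrow> N$i$j = 0) \<longrightarrow>
        (\<exists>d>0. det N = complex_of_real d \<and> (\<integral>\<^sup>+z. ennreal (exp (- Re (qf N z))) \<partial>lborel) = ennreal (pi ^ CARD('n) / d))" for S
  proof (induction S rule: finite_induct)
    case empty
    then show ?case using gauss_diag_case by blast
  next
    case (insert k S)
    show ?case
    proof (intro allI impI, elim conjE)
      fix N :: "complex^'n^'n"
      assume "herm_pd N" "\<forall>i j. i \<noteq> j \<and> (i \<notin> insert k S \<or> j \<notin> insert k S) \<longrightarrow> N$i$j = 0"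
      moreover have IH': "\<And>N'::complex^'n^'n. herm_pd N' \<Longrightarrow> (\<forall>i j. i \<noteq> j \<and> (i \<notin> S \<or> j \<notin> S) \<longrightarrow> N'$i$j = 0) \<Longrightarrow>
        \<exists>d>0. det N' = complex_of_real d \<and> (\<integral>\<^sup>+z. ennreal (exp (- Re (qf N' z))) \<partial>lborel) = ennreal (pi ^ CARD('n) / d)"
        using insert.IH by simp
      ultimately show "\<exists>d>0. det N = complex_of_real d \<and> (\<integral>\<^sup>+z. ennreal (exp (- Re (qf N z))) \<partial>lborel) = ennreal (pi ^ CARD('n) / d)"
        using gauss_step[of N S k] by simp
    qed
  qed
  then show ?thesis using pd by auto
qed

lemma herm_pd_det:
  assumes "herm_pd (M::complex^'n::finite^'n)"
  shows "Re (det M) > 0" "det M = complex_of_real (Re (det M))"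
  using gauss_core[OF assms] by auto

lemma herm_pd_invertible: "herm_pd M \<Longrightarrow> invertible M"
  using herm_pd_det[of M] by (auto simp: invertible_det_nz)

lemma gauss_nn:
  fixes M :: "complex^'n::finite^'n"
  assumes pd: "herm_pd M"
  shows "(\<integral>\<^sup>+z. ennreal (exp (- Re (qf M (z - m)))) \<partial>lborel) = ennreal (pi ^ CARD('n) / Re (det M))"
proof -
  obtain d where d: "d > 0" "det M = complex_of_real d" "(\<integral>\<^sup>+z. ennreal (exp (- Re (qf M z))) \<partial>lborel) = ennreal (pi ^ CARD('n) / d)"
    using gauss_core[OF pd] by blast
  have "(\<integral>\<^sup>+z. ennreal (exp (- Re (qf M (z - m)))) \<partial>lborel) = (\<integral>\<^sup>+z. ennreal (exp (- Re (qf M (z + (- m))))) \<partial>lborel)"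
    by simp
  also have "\<dots> = (\<integral>\<^sup>+z. ennreal (exp (- Re (qf M z))) \<partial>lborel)"
    by (rule nn_integral_translate[where h="\<lambda>z. ennreal (exp (- Re (qf M z)))"]) measurable
  finally show ?thesis using d by simp
qed

lemma gauss_bochner:
  fixes M :: "complex^'n::finite^'n"
  assumes pd: "herm_pd M"
  shows "has_bochner_integral lborel (\<lambda>z. exp (- Re (qf M (z - m)))) (pi ^ CARD('n) / Re (det M))"
proof (rule has_bochner_integral_nn_integral)
  show "(\<lambda>z. exp (- Re (qf M (z - m)))) \<in> borel_measurable lborel" by measurable
  show "0 \<le> pi ^ CARD('n) / Re (det M)" using herm_pd_det[OF pd] by simp
qed (use gauss_nn[OF pd] in auto)

lemma mat_scaleR_nth: "(c *\<^sub>R (A::complex^'n::finite^'m::finite))$i$j = complex_of_real c * A$i$j"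
  by (subst vector_scaleR_component)+ (rule scaleR_conv_of_real)

lemma det_scaleR: "det (c *\<^sub>R (A::complex^'n::finite^'n)) = complex_of_real c ^ CARD('n) * det A"
proof -
  have "det (c *\<^sub>R A) = (\<Sum>p\<in>{p. p permutes UNIV}. of_int (sign p) * (\<Prod>i\<in>UNIV. complex_of_real c * A $ i $ p i))"
    unfolding det_def by (simp only: mat_scaleR_nth)
  also have "\<dots> = (\<Sum>p\<in>{p. p permutes UNIV}. complex_of_real c ^ CARD('n) * (of_int (sign p) * (\<Prod>i\<in>UNIV. A $ i $ p i)))"
    by (simp add: prod.distrib mult.left_commute)
  also have "\<dots> = complex_of_real c ^ CARD('n) * det A"
    unfolding det_def by (simp add: sum_distrib_left)
  finally show ?thesis .
qed

lemma mv_scaleR_left: "(c *\<^sub>R A) *v x = c *\<^sub>R (A *v (x::complex^'n::finite))"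
  by (simp add: vec_eq_iff matrix_vector_mult_def scaleR_sum_right)

lemma mv_scaleR_right: "A *v (c *\<^sub>R x) = c *\<^sub>R (A *v (x::complex^'n::finite))"
  by (simp add: vec_eq_iff matrix_vector_mult_def scaleR_sum_right)

lemma matrix_inv_props:
  assumes "invertible (A::'a::semiring_1^'n^'m)"
  shows "A ** matrix_inv A = mat 1" "matrix_inv A ** A = mat 1"
  using someI_ex[OF assms[unfolded invertible_def]] unfolding matrix_inv_def by auto

lemma qf_zero[simp]: "qf M 0 = 0" by (simp add: qf_def)

lemma qf_add: "qf (A + B) z = qf A z + qf B z"
  by (simp add: qf_cdot matrix_vector_mult_add_rdistrib cdot_add_right)
lemma qf_diff: "qf (A - B) z = qf A z - qf B z"
  by (simp add: qf_cdot matrix_vector_mult_diff_rdistrib cdot_diff_right)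
lemma qf_scaleR: "qf (r *\<^sub>R A) z = of_real r * qf A z"
  by (simp add: qf_cdot mv_scaleR_left cdot_scaleR_right)
lemma qf_HH: "qf (cadj H ** H) x = complex_of_real ((norm (H *v x))\<^sup>2)"
  by (simp add: qf_cdot matrix_vector_mul_assoc[symmetric] cdot_adj cdot_self)

lemma hermitian_inv:
  assumes h: "hermitian B" and inv: "invertible B"
  shows "hermitian (matrix_inv B)"
proof -
  note bi = matrix_inv_props[OF inv]
  have "cadj (matrix_inv B) ** B = mat 1"
    using arg_cong[OF bi(1), of cadj] h by (simp add: cadj_mult hermitian_def)
  then have "cadj (matrix_inv B) = cadj (matrix_inv B) ** (B ** matrix_inv B)" using bi by simp
  also have "\<dots> = matrix_inv B"
    using \<open>cadj (matrix_inv B) ** B = mat 1\<close> by (simp add: matrix_mul_assoc)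
  finally show ?thesis by (simp add: hermitian_def)
qed

lemma hermitian_real_qf: "hermitian M \<Longrightarrow> qf M z = complex_of_real (Re (qf M z))"
  using hermitian_qf_real[of M z] by (simp add: complex_eq_iff)

lemma cdot_self_Re: "Re (cdot u u) = (norm u)\<^sup>2"
  by (simp add: cdot_self)

lemma A_pd:
  fixes Q :: "complex^'t::finite^'t"
  assumes Q: "herm_pd Q" and r: "r \<ge> 0" and IrQ: "herm_pd (mat 1 - r *\<^sub>R Q)"
  shows "herm_pd (matrix_inv Q - r *\<^sub>R mat 1)"
proof -
  have hQ: "hermitian Q" using Q by (simp add: herm_pd_def)
  have invQ: "invertible Q" by (rule herm_pd_invertible[OF Q])
  note qi = matrix_inv_props[OF invQ]
  have hQi: "hermitian (matrix_inv Q)" by (rule hermitian_inv[OF hQ invQ])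
  have herm: "hermitian (matrix_inv Q - r *\<^sub>R mat 1)"
    using hQi by (simp add: hermitian_def cadj_diff cadj_scaleR)
  show ?thesis unfolding herm_pd_qf
  proof (intro conjI herm allI impI)
    fix x :: "complex^'t" assume x0: "x \<noteq> 0"
    define w where "w = matrix_inv Q *v x"
    have xw: "Q *v w = x" by (simp add: w_def matrix_vector_mul_assoc qi)
    have w0: "w \<noteq> 0" using xw x0 by auto
    have qQw: "Re (qf Q w) > 0" using Q w0 by (simp add: herm_pd_qf)
    have cQ: "cadj Q = Q" using hQ by (simp add: hermitian_def)
    have e1: "qf (matrix_inv Q) x = qf Q w"
    proof -
      have "qf (matrix_inv Q) x = cdot (Q *v w) w" by (simp add: qf_cdot w_def[symmetric] xw)
      also have "\<dots> = cnj (qf Q w)" by (simp add: qf_cdot cnj_cdot)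
      also have "\<dots> = qf Q w" by (rule hermitian_qf_real[OF hQ])
      finally show ?thesis .
    qed
    have eA: "Re (qf (matrix_inv Q - r *\<^sub>R mat 1) x) = Re (qf Q w) - r * (norm x)\<^sup>2"
      by (simp add: qf_diff qf_scaleR qf_mat1 e1)
    show "Re (qf (matrix_inv Q - r *\<^sub>R mat 1) x) > 0"
    proof (cases "r = 0")
      case True then show ?thesis using eA qQw by simp
    next
      case False
      then have rpos: "r > 0" using r by simp
      have h1: "(norm x)\<^sup>2 - r * Re (qf Q x) > 0"
        using IrQ x0 by (simp add: herm_pd_qf qf_diff qf_scaleR qf_mat1)
      have h2: "Re (qf Q (w - r *\<^sub>R x)) \<ge> 0"
        using Q by (cases "w - r *\<^sub>R x = 0") (auto simp: herm_pd_qf intro: less_imp_le)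
      have c1: "cdot x (Q *v w) = complex_of_real ((norm x)\<^sup>2)" by (simp add: xw cdot_self)
      have c2: "cdot w (Q *v x) = complex_of_real ((norm x)\<^sup>2)"
        by (simp add: cdot_adj cQ xw cdot_self)
      have "qf Q (w - r *\<^sub>R x) = qf Q w - of_real r * cdot w (Q *v x) - of_real r * cdot x (Q *v w) + of_real r * of_real r * qf Q x"
        by (simp add: qf_cdot matrix_vector_mult_diff_distrib mv_scaleR_right cdot_diff_left cdot_diff_right
            cdot_scaleR_left cdot_scaleR_right algebra_simps)
      then have "Re (qf Q (w - r *\<^sub>R x)) = Re (qf Q w) - 2 * r * (norm x)\<^sup>2 + r * r * Re (qf Q x)"
        by (simp add: c1 c2)
      with h2 have "Re (qf Q w) \<ge> 2 * r * (norm x)\<^sup>2 - r * (r * Re (qf Q x))" by (simp add: algebra_simps)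
      moreover have "r * (r * Re (qf Q x)) < r * (norm x)\<^sup>2" using h1 rpos by simp
      ultimately show ?thesis using eA by linarith
    qed
  qed
qed

definition Bm :: "complex^'t::finite^'t \<Rightarrow> complex^'t^'r::finite \<Rightarrow> real \<Rightarrow> complex^'t^'t" where
  "Bm A H s = A + (1/s) *\<^sub>R (cadj H ** H)"
definition Km :: "complex^'t::finite^'t \<Rightarrow> complex^'t^'r::finite \<Rightarrow> real \<Rightarrow> complex^'r^'r" where
  "Km A H s = (1/s) *\<^sub>R (mat 1 - (1/s) *\<^sub>R (H ** matrix_inv (Bm A H s) ** cadj H))"
definition ctr :: "complex^'t::finite^'t \<Rightarrow> complex^'t^'r::finite \<Rightarrow> real \<Rightarrow> complex^'r \<Rightarrow> complex^'t" where
  "ctr A H s y = matrix_inv (Bm A H s) *v ((1/s) *\<^sub>R (cadj H *v y))"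

lemma Bm_qf: "qf (Bm A H s) x = qf A x + complex_of_real (1/s) * complex_of_real ((norm (H *v x))\<^sup>2)"
  by (simp add: Bm_def qf_add qf_scaleR qf_HH)

lemma B_pd:
  assumes A: "herm_pd A" and s: "s > 0"
  shows "herm_pd (Bm A H s)"
  unfolding herm_pd_qf
proof (intro conjI allI impI)
  show "hermitian (Bm A H s)" using A
    by (simp add: herm_pd_def hermitian_def Bm_def cadj_add cadj_scaleR cadj_mult)
  fix x :: "complex^'a" assume "x \<noteq> 0"
  then have "Re (qf A x) > 0" using A by (simp add: herm_pd_qf)
  then show "Re (qf (Bm A H s) x) > 0" using s by (simp add: Bm_qf add_pos_nonneg)
qed

lemma complete_sq:
  fixes A :: "complex^'t::finite^'t" and H :: "complex^'t^'r::finite"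
  assumes A: "herm_pd A" and s: "s > 0"
  shows "qf A x + complex_of_real ((norm (y - H *v x))\<^sup>2 / s) = qf (Bm A H s) (x - ctr A H s y) + qf (Km A H s) y"
proof -
  let ?B = "Bm A H s" let ?Bi = "matrix_inv (Bm A H s)"
  have Bpd: "herm_pd ?B" by (rule B_pd[OF A s])
  have invB: "invertible ?B" by (rule herm_pd_invertible[OF Bpd])
  note bi = matrix_inv_props[OF invB]
  have hB: "cadj ?B = ?B" using Bpd by (simp add: herm_pd_def hermitian_def)
  have hBi: "cadj ?Bi = ?Bi" using hermitian_inv[of ?B] Bpd invB by (simp add: herm_pd_def hermitian_def)
  define \<sigma> where "\<sigma> = complex_of_real (1/s)"
  define h where "h = (1/s) *\<^sub>R (cadj H *v y)"
  define m where "m = ?Bi *v h"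
  define u where "u = H *v x"
  define T where "T = cdot y (H *v (?Bi *v (cadj H *v y)))"
  have mdef: "ctr A H s y = m" by (simp add: ctr_def m_def h_def)
  have Bm: "?B *v m = h" by (simp add: m_def matrix_vector_mul_assoc bi)
  have E1: "complex_of_real ((norm (y - u))\<^sup>2) = cdot y y - cdot y u - cdot u y + cdot u u"
    using cdot_self[of "y - u"] by (simp add: cdot_diff_left cdot_diff_right algebra_simps)
  have xBx: "cdot x (?B *v x) = qf A x + \<sigma> * cdot u u"
    by (simp add: qf_cdot[symmetric] Bm_qf \<sigma>_def u_def cdot_self)
  have xh: "cdot x h = \<sigma> * cdot u y"
    by (simp add: h_def cdot_scaleR_right cdot_adj \<sigma>_def u_def)
  have mBx: "cdot m (?B *v x) = \<sigma> * cdot y u"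
  proof -
    have "cdot m (?B *v x) = cdot h x" by (simp add: cdot_adj hB Bm)
    also have "\<dots> = cnj (cdot x h)" by (simp add: cnj_cdot)
    also have "\<dots> = \<sigma> * cdot y u" by (simp add: xh cnj_cdot \<sigma>_def)
    finally show ?thesis .
  qed
  have mh: "cdot m h = \<sigma> * \<sigma> * T"
  proof -
    have "cdot m h = cdot h (?Bi *v h)" by (simp add: m_def cdot_adj hBi)
    also have "\<dots> = \<sigma> * \<sigma> * cdot (cadj H *v y) (?Bi *v (cadj H *v y))"
      by (simp add: h_def cdot_scaleR_left cdot_scaleR_right mv_scaleR_right \<sigma>_def)
    also have "cdot (cadj H *v y) (?Bi *v (cadj H *v y)) = T"
      by (simp add: T_def cdot_adj)
    finally show ?thesis .
  qed
  have E2: "qf ?B (x - m) = qf A x + \<sigma> * cdot u u - \<sigma> * cdot u y - \<sigma> * cdot y u + \<sigma> * \<sigma> * T"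
  proof -
    have "qf ?B (x - m) = cdot x (?B *v x) - cdot x h - cdot m (?B *v x) + cdot m h"
      by (simp add: qf_cdot matrix_vector_mult_diff_distrib Bm cdot_diff_left cdot_diff_right)
    then show ?thesis by (simp add: xBx xh mBx mh)
  qed
  have E3: "qf (Km A H s) y = \<sigma> * cdot y y - \<sigma> * \<sigma> * T"
    by (simp add: qf_cdot Km_def mv_scaleR_left matrix_vector_mult_diff_rdistrib cdot_scaleR_right
        cdot_diff_right matrix_vector_mul_assoc[symmetric] T_def \<sigma>_def algebra_simps)
  have Nsub: "complex_of_real ((norm (y - H *v x))\<^sup>2 / s) = \<sigma> * (cdot y y - cdot y u - cdot u y + cdot u u)"
  proof -
    have "complex_of_real ((norm (y - H *v x))\<^sup>2 / s) = \<sigma> * complex_of_real ((norm (y - u))\<^sup>2)"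
      by (simp add: \<sigma>_def u_def)
    then show ?thesis by (simp only: E1)
  qed
  show ?thesis unfolding Nsub mdef E2 E3 by (simp add: algebra_simps)
qed

lemma K_pd:
  fixes A :: "complex^'t::finite^'t" and H :: "complex^'t^'r::finite"
  assumes A: "herm_pd A" and s: "s > 0"
  shows "herm_pd (Km A H s)"
  unfolding herm_pd_qf
proof (intro conjI allI impI)
  let ?B = "Bm A H s" let ?Bi = "matrix_inv (Bm A H s)"
  have Bpd: "herm_pd ?B" by (rule B_pd[OF A s])
  have invB: "invertible ?B" by (rule herm_pd_invertible[OF Bpd])
  have hBi: "cadj ?Bi = ?Bi" using hermitian_inv[of ?B] Bpd invB by (simp add: herm_pd_def hermitian_def)
  show "hermitian (Km A H s)"
    by (simp add: hermitian_def Km_def cadj_scaleR cadj_diff cadj_mult hBi matrix_mul_assoc)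
  fix y :: "complex^'r" assume y0: "y \<noteq> 0"
  define m where "m = ctr A H s y"
  have eq: "qf A m + complex_of_real ((norm (y - H *v m))\<^sup>2 / s) = qf (Km A H s) y"
    using complete_sq[OF A s, of m y H] by (simp add: m_def)
  have "Re (qf A m) + (norm (y - H *v m))\<^sup>2 / s > 0"
  proof (cases "m = 0")
    case True then show ?thesis using y0 s by simp
  next
    case False then have "Re (qf A m) > 0" using A by (simp add: herm_pd_qf)
    then show ?thesis using s by (simp add: add_pos_nonneg)
  qed
  then show "Re (qf (Km A H s) y) > 0" using arg_cong[OF eq, of Re] by simp
qed

lemma woodbury:
  fixes A :: "complex^'t::finite^'t" and H :: "complex^'t^'r::finite"
  assumes A: "herm_pd A" and s: "s > 0"
  shows "(mat 1 + (1/s) *\<^sub>R (H ** matrix_inv A ** cadj H)) ** (mat 1 - (1/s) *\<^sub>R (H ** matrix_inv (Bm A H s) ** cadj H)) = mat 1"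
proof -
  let ?B = "Bm A H s" let ?Bi = "matrix_inv (Bm A H s)"
  have Bpd: "herm_pd ?B" by (rule B_pd[OF A s])
  note bi = matrix_inv_props[OF herm_pd_invertible[OF Bpd]]
  note ai = matrix_inv_props[OF herm_pd_invertible[OF A]]
  have "((mat 1 + (1/s) *\<^sub>R (H ** matrix_inv A ** cadj H)) ** (mat 1 - (1/s) *\<^sub>R (H ** ?Bi ** cadj H))) *v v = mat 1 *v v" for v
  proof -
    define g where "g = cadj H *v v"
    define p where "p = ?Bi *v g"
    have Bp: "?B *v p = g" by (simp add: p_def matrix_vector_mul_assoc bi)
    have Ap: "A *v p = g - (1/s) *\<^sub>R (cadj H *v (H *v p))"
      using Bp by (simp add: Bm_def matrix_vector_mult_add_rdistrib mv_scaleR_left matrix_vector_mul_assoc algebra_simps)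
    define w where "w = v - (1/s) *\<^sub>R (H *v p)"
    have Wv: "(mat 1 - (1/s) *\<^sub>R (H ** ?Bi ** cadj H)) *v v = w"
      by (simp add: w_def p_def g_def matrix_vector_mult_diff_rdistrib mv_scaleR_left matrix_vector_mul_assoc[symmetric])
    have Hw: "cadj H *v w = A *v p"
      by (simp add: w_def Ap g_def matrix_vector_mult_diff_distrib mv_scaleR_right)
    have "(mat 1 + (1/s) *\<^sub>R (H ** matrix_inv A ** cadj H)) *v w = w + (1/s) *\<^sub>R (H *v (matrix_inv A *v (cadj H *v w)))"
      by (simp add: matrix_vector_mult_add_rdistrib mv_scaleR_left matrix_vector_mul_assoc[symmetric])
    also have "matrix_inv A *v (cadj H *v w) = p" by (simp add: Hw matrix_vector_mul_assoc ai)
    finally have "(mat 1 + (1/s) *\<^sub>R (H ** matrix_inv A ** cadj H)) *v w = v" by (simp add: w_def)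
    then show ?thesis by (simp add: matrix_vector_mul_assoc[symmetric] Wv)
  qed
  then show ?thesis by (simp add: matrix_eq)
qed

lemma meas_mv[measurable]: "(\<lambda>x. (H::complex^'t::finite^'r::finite) *v x) \<in> borel_measurable borel"
  unfolding matrix_vector_mult_def by (intro borel_measurable_continuous_onI continuous_intros)

lemma col_gauss:
  fixes A :: "complex^'t::finite^'t" and H :: "complex^'t^'r::finite"
  assumes A: "herm_pd A" and s: "s > 0"
  shows "(\<integral>\<^sup>+x. ennreal (exp (- (Re (qf A x) + (norm (y - H *v x))\<^sup>2 / s))) \<partial>lborel)
       = ennreal (exp (- Re (qf (Km A H s) y)) * (pi ^ CARD('t) / Re (det (Bm A H s))))"
proof -
  have eq: "Re (qf A x) + (norm (y - H *v x))\<^sup>2 / s = Re (qf (Bm A H s) (x - ctr A H s y)) + Re (qf (Km A H s) y)" for x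
    using arg_cong[OF complete_sq[OF A s, of x y H], of Re] by simp
  have "(\<integral>\<^sup>+x. ennreal (exp (- (Re (qf A x) + (norm (y - H *v x))\<^sup>2 / s))) \<partial>lborel)
      = (\<integral>\<^sup>+x. ennreal (exp (- Re (qf (Km A H s) y))) * ennreal (exp (- Re (qf (Bm A H s) (x - ctr A H s y)))) \<partial>lborel)"
    by (intro nn_integral_cong) (simp add: eq ennreal_mult'[symmetric] exp_add[symmetric] algebra_simps)
  also have "\<dots> = ennreal (exp (- Re (qf (Km A H s) y))) * (\<integral>\<^sup>+x. ennreal (exp (- Re (qf (Bm A H s) (x - ctr A H s y)))) \<partial>lborel)"
    by (rule nn_integral_cmult) measurable
  also have "\<dots> = ennreal (exp (- Re (qf (Km A H s) y))) * ennreal (pi ^ CARD('t) / Re (det (Bm A H s)))"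
    by (simp add: gauss_nn[OF B_pd[OF A s]])
  also have "\<dots> = ennreal (exp (- Re (qf (Km A H s) y)) * (pi ^ CARD('t) / Re (det (Bm A H s))))"
    using herm_pd_det(1)[OF B_pd[OF A s], of H] by (subst ennreal_mult[symmetric]) (auto intro!: divide_nonneg_nonneg)
  finally show ?thesis .
qed

lemma scaled_id_pd: "c > 0 \<Longrightarrow> herm_pd (c *\<^sub>R (mat 1 :: complex^'n::finite^'n))"
  by (simp add: herm_pd_qf qf_scaleR qf_mat1 hermitian_def cadj_scaleR)

lemma det_rel:
  fixes A :: "complex^'t::finite^'t" and H :: "complex^'t^'r::finite"
  assumes A: "herm_pd A" and s: "s > 0"
  shows "Re (det (Bm A H s)) * Re (det (Km A H s)) = Re (det A) / s ^ CARD('r)"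
proof -
  define f where "f x y = ennreal (exp (- (Re (qf A x) + (norm (y - H *v x))\<^sup>2 / s)))" for x y
  have fm: "case_prod f \<in> borel_measurable (lborel \<Otimes>\<^sub>M lborel)"
    unfolding f_def by measurable
  have dB: "Re (det (Bm A H s)) > 0" by (rule herm_pd_det(1)[OF B_pd[OF A s]])
  have dK: "Re (det (Km A H s)) > 0" by (rule herm_pd_det(1)[OF K_pd[OF A s]])
  have dA: "Re (det A) > 0" by (rule herm_pd_det(1)[OF A])
  have J1: "(\<integral>\<^sup>+ y. (\<integral>\<^sup>+ x. f x y \<partial>lborel) \<partial>lborel) = ennreal ((pi ^ CARD('t) / Re (det (Bm A H s))) * (pi ^ CARD('r) / Re (det (Km A H s))))"
  proof -
    have "(\<integral>\<^sup>+ y. (\<integral>\<^sup>+ x. f x y \<partial>lborel) \<partial>lborel) = (\<integral>\<^sup>+ y. ennreal (pi ^ CARD('t) / Re (det (Bm A H s))) * ennreal (exp (- Re (qf (Km A H s) (y - 0)))) \<partial>lborel)"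
      unfolding f_def col_gauss[OF A s]
      using dB by (intro nn_integral_cong) (simp add: ennreal_mult'[symmetric] mult.commute)
    also have "\<dots> = ennreal (pi ^ CARD('t) / Re (det (Bm A H s))) * (\<integral>\<^sup>+ y. ennreal (exp (- Re (qf (Km A H s) (y - 0)))) \<partial>lborel)"
      by (rule nn_integral_cmult) measurable
    also have "\<dots> = ennreal ((pi ^ CARD('t) / Re (det (Bm A H s))) * (pi ^ CARD('r) / Re (det (Km A H s))))"
      using dB dK by (simp only: gauss_nn[OF K_pd[OF A s], where m=0]) (subst ennreal_mult[symmetric]; auto intro!: divide_nonneg_nonneg)
    finally show ?thesis .
  qed
  have J2: "(\<integral>\<^sup>+ x. (\<integral>\<^sup>+ y. f x y \<partial>lborel) \<partial>lborel) = ennreal ((pi ^ CARD('r) * s ^ CARD('r)) * (pi ^ CARD('t) / Re (det A)))"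
  proof -
    have sI: "herm_pd ((1/s) *\<^sub>R (mat 1 :: complex^'r^'r))" using s by (simp add: scaled_id_pd)
    have dsI: "Re (det ((1/s) *\<^sub>R (mat 1 :: complex^'r^'r))) = (1/s) ^ CARD('r)"
      by (simp add: det_scaleR det_I)
    have inner: "(\<integral>\<^sup>+ y. f x y \<partial>lborel) = ennreal (pi ^ CARD('r) * s ^ CARD('r)) * ennreal (exp (- Re (qf A x)))" for x
    proof -
      have "(\<integral>\<^sup>+ y. f x y \<partial>lborel) = (\<integral>\<^sup>+ y. ennreal (exp (- Re (qf A x))) * ennreal (exp (- Re (qf ((1/s) *\<^sub>R mat 1) (y - H *v x)))) \<partial>lborel)"
        unfolding f_def
        by (intro nn_integral_cong) (simp add: ennreal_mult'[symmetric] exp_add[symmetric] qf_scaleR qf_mat1 algebra_simps)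
      also have "\<dots> = ennreal (exp (- Re (qf A x))) * (\<integral>\<^sup>+ y. ennreal (exp (- Re (qf ((1/s) *\<^sub>R mat 1) (y - H *v x)))) \<partial>lborel)"
        by (rule nn_integral_cmult) measurable
      also have "\<dots> = ennreal (exp (- Re (qf A x))) * ennreal (pi ^ CARD('r) * s ^ CARD('r))"
        using s by (simp add: gauss_nn[OF sI] dsI power_one_over)
      finally show ?thesis by (simp add: mult.commute)
    qed
    have "(\<integral>\<^sup>+ x. (\<integral>\<^sup>+ y. f x y \<partial>lborel) \<partial>lborel) = ennreal (pi ^ CARD('r) * s ^ CARD('r)) * (\<integral>\<^sup>+ x. ennreal (exp (- Re (qf A (x - 0)))) \<partial>lborel)"
      unfolding inner by (simp add: nn_integral_cmult)
    also have "\<dots> = ennreal ((pi ^ CARD('r) * s ^ CARD('r)) * (pi ^ CARD('t) / Re (det A)))"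
      using dA s by (simp only: gauss_nn[OF A, where m=0]) (subst ennreal_mult[symmetric]; auto intro!: divide_nonneg_nonneg)
    finally show ?thesis .
  qed
  have "(\<integral>\<^sup>+ y. (\<integral>\<^sup>+ x. f x y \<partial>lborel) \<partial>lborel) = (\<integral>\<^sup>+ x. (\<integral>\<^sup>+ y. f x y \<partial>lborel) \<partial>lborel)"
    by (rule lborel_pair.Fubini'[OF fm])
  then have "(pi ^ CARD('t) / Re (det (Bm A H s))) * (pi ^ CARD('r) / Re (det (Km A H s))) = (pi ^ CARD('r) * s ^ CARD('r)) * (pi ^ CARD('t) / Re (det A))"
    unfolding J1 J2 using dA dB dK s by (subst (asm) ennreal_inj) (auto intro!: divide_nonneg_nonneg mult_nonneg_nonneg)
  then show ?thesis using dA dB dK s by (simp add: field_simps)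
qed

definition col :: "'c::finite \<Rightarrow> complex^'c^'t::finite \<Rightarrow> complex^'t" where
  "col j X = (\<chi> i. X$i$j)"

lemma col_nth[simp]: "col j X $ i = X$i$j" by (simp add: col_def)

lemma meas_col[measurable]: "(\<lambda>X. col j X) \<in> borel_measurable borel"
  unfolding col_def by measurable

lemma prod_cols_nn:
  fixes f :: "'c::finite \<Rightarrow> complex^'t::finite \<Rightarrow> ennreal"
  assumes [measurable]: "\<And>j. f j \<in> borel_measurable borel"
  shows "(\<integral>\<^sup>+X. (\<Prod>j\<in>UNIV. f j (col j X)) \<partial>(lborel::(complex^'c^'t) measure)) = (\<Prod>j\<in>UNIV. \<integral>\<^sup>+x. f j x \<partial>lborel)"
proof -
  interpret P: product_sigma_finite "\<lambda>_::'c. lborel::(complex^'t) measure" by standard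
  have m: "(\<lambda>w::'c \<Rightarrow> complex^'t. \<chi> i j. w j $ i) \<in> borel_measurable (PiM UNIV (\<lambda>_. lborel))"
    by measurable
  have "(\<integral>\<^sup>+X. (\<Prod>j\<in>UNIV. f j (col j X)) \<partial>(lborel::(complex^'c^'t) measure))
      = (\<integral>\<^sup>+X. (\<Prod>j\<in>UNIV. f j (col j X)) \<partial>distr (PiM UNIV (\<lambda>_. lborel)) borel (\<lambda>w::'c \<Rightarrow> complex^'t. \<chi> i j. w j $ i))"
    by (simp add: lborel_cols)
  also have "\<dots> = (\<integral>\<^sup>+w. (\<Prod>j\<in>UNIV. f j (col j (\<chi> i j. w j $ i))) \<partial>PiM UNIV (\<lambda>_. lborel))"
    by (rule nn_integral_distr[OF m]) measurable
  also have "\<dots> = (\<integral>\<^sup>+w. (\<Prod>j\<in>UNIV. f j (w j)) \<partial>PiM UNIV (\<lambda>_. lborel))"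
  proof -
    have "col j (\<chi> i j. w j $ i) = w j" for j and w :: "'c \<Rightarrow> complex^'t" by (simp add: vec_eq_iff)
    then show ?thesis by simp
  qed
  also have "\<dots> = (\<Prod>j\<in>UNIV. \<integral>\<^sup>+x. f j x \<partial>lborel)"
    by (rule P.product_nn_integral_prod) auto
  finally show ?thesis .
qed

lemma trace_qf_cols: "trace (M ** X ** cadj X) = (\<Sum>j\<in>UNIV. qf M (col j X))"
proof -
  have "trace (M ** X ** cadj X) = (\<Sum>i\<in>UNIV. \<Sum>j\<in>UNIV. \<Sum>b\<in>UNIV. cnj (X$i$j) * M$i$b * X$b$j)"
    by (simp add: trace_def matrix_matrix_mult_def sum_distrib_right sum_distrib_left mult.commute mult.left_commute)
  also have "\<dots> = (\<Sum>j\<in>UNIV. \<Sum>i\<in>UNIV. \<Sum>b\<in>UNIV. cnj (X$i$j) * M$i$b * X$b$j)"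
    by (rule sum.swap)
  also have "\<dots> = (\<Sum>j\<in>UNIV. qf M (col j X))" by (simp add: qf_def)
  finally show ?thesis .
qed

lemma col_mult: "col j (H ** X) = H *v col j X"
  by (simp add: vec_eq_iff matrix_matrix_mult_def matrix_vector_mult_def)
lemma col_diff: "col j (Y - X) = col j Y - col j X"
  by (simp add: vec_eq_iff)

lemma trace_neg: "trace (- A) = - trace (A::complex^'n::finite^'n)"
  by (simp add: trace_def sum_negf)
lemma trace_scaleR: "trace (c *\<^sub>R A) = complex_of_real c * trace (A::complex^'n::finite^'n)"
  unfolding trace_def by (simp only: mat_scaleR_nth sum_distrib_left)

lemma trace_norm_cols: "trace (X ** cadj X) = (\<Sum>j\<in>UNIV. complex_of_real ((norm (col j X))\<^sup>2))"
  using trace_qf_cols[of "mat 1" X] by (simp add: qf_mat1)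

lemma exp_powr': "exp (x::real) powr y = exp (x * y)"
  by (simp add: powr_def mult.commute)

lemma integrand_eq:
  fixes N0 P \<rho> r :: real and Q :: "complex^'t::finite^'t" and H :: "complex^'t^'r::finite"
    and X :: "complex^'c::finite^'t" and Y :: "complex^'c^'r"
  assumes N0: "N0 > 0" and \<rho>: "0 \<le> \<rho>"
  shows "pX Q X * exp (r * (Re (trace (X ** cadj X)) - real CARD('c) * P)) * pYXH N0 Y X H powr (1 / (1 + \<rho>))
    = (pi powr (- real (CARD('t) * CARD('c))) * Re (det Q) powr (- real CARD('c)) * exp (- r * real CARD('c) * P)
        * ((pi * N0) powr (- real (CARD('r) * CARD('c)))) powr (1 / (1 + \<rho>)))
      * (\<Prod>j\<in>UNIV. exp (- (Re (qf (matrix_inv Q - r *\<^sub>R mat 1) (col j X)) + (norm (col j Y - H *v col j X))\<^sup>2 / (N0 * (1 + \<rho>)))))"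
proof -
  let ?Qi = "matrix_inv Q"
  define c1 where "c1 = pi powr (- real (CARD('t) * CARD('c))) * Re (det Q) powr (- real CARD('c))"
  define c2 where "c2 = (pi * N0) powr (- real (CARD('r) * CARD('c)))"
  define e1 where "e1 = - (\<Sum>j\<in>UNIV. Re (qf ?Qi (col j X)))"
  define e2 where "e2 = r * (\<Sum>j\<in>UNIV. (norm (col j X))\<^sup>2)"
  define e3 where "e3 = - (1 / N0) * (\<Sum>j\<in>UNIV. (norm (col j Y - H *v col j X))\<^sup>2)"
  have c2pos: "c2 > 0" using N0 by (simp add: c2_def)
  have hpX: "pX Q X = c1 * exp e1"
  proof -
    have "Re (trace (- (?Qi ** X ** cadj X))) = e1"
      by (simp add: trace_neg trace_qf_cols e1_def)
    then show ?thesis by (simp add: pX_def c1_def)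
  qed
  have hr: "exp (r * (Re (trace (X ** cadj X)) - real CARD('c) * P)) = exp (- r * real CARD('c) * P) * exp e2"
  proof -
    have "Re (trace (X ** cadj X)) = (\<Sum>j\<in>UNIV. (norm (col j X))\<^sup>2)"
      by (simp add: trace_norm_cols)
    then show ?thesis by (simp add: e2_def exp_add[symmetric] algebra_simps)
  qed
  have hY: "pYXH N0 Y X H = c2 * exp e3"
  proof -
    have "Re (trace (- ((1 / N0) *\<^sub>R ((Y - H ** X) ** cadj (Y - H ** X))))) = e3"
    proof -
      have "trace ((Y - H ** X) ** cadj (Y - H ** X)) = (\<Sum>j\<in>UNIV. complex_of_real ((norm (col j Y - H *v col j X))\<^sup>2))"
        by (simp only: trace_norm_cols col_diff col_mult)
      then show ?thesis by (simp add: trace_neg trace_scaleR e3_def)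
    qed
    then show ?thesis by (simp add: pYXH_def c2_def)
  qed
  have hYp: "pYXH N0 Y X H powr (1 / (1 + \<rho>)) = c2 powr (1 / (1 + \<rho>)) * exp (e3 / (1 + \<rho>))"
    using c2pos by (simp add: hY powr_mult exp_powr')
  have sum_eq: "e1 + e2 + e3 / (1 + \<rho>) = - (\<Sum>j\<in>UNIV. Re (qf (?Qi - r *\<^sub>R mat 1) (col j X)) + (norm (col j Y - H *v col j X))\<^sup>2 / (N0 * (1 + \<rho>)))"
    using \<rho> by (simp add: e1_def e2_def e3_def qf_diff qf_scaleR qf_mat1 sum.distrib sum_subtractf
        sum_distrib_left sum_divide_distrib sum_negf field_simps)
  have "pX Q X * exp (r * (Re (trace (X ** cadj X)) - real CARD('c) * P)) * pYXH N0 Y X H powr (1 / (1 + \<rho>))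
      = (c1 * exp (- r * real CARD('c) * P) * c2 powr (1 / (1 + \<rho>))) * exp (e1 + e2 + e3 / (1 + \<rho>))"
    by (simp add: hpX hr hYp exp_add)
  also have "exp (e1 + e2 + e3 / (1 + \<rho>)) = (\<Prod>j\<in>UNIV. exp (- (Re (qf (?Qi - r *\<^sub>R mat 1) (col j X)) + (norm (col j Y - H *v col j X))\<^sup>2 / (N0 * (1 + \<rho>)))))"
    by (simp only: sum_eq sum_negf[symmetric] exp_sum[OF finite])
  finally show ?thesis by (simp add: c1_def c2_def)
qed

lemma X_integral:
  fixes A :: "complex^'t::finite^'t" and H :: "complex^'t^'r::finite" and Y :: "complex^'c::finite^'r"
  assumes A: "herm_pd A" and s: "s > 0" and C0: "C0 \<ge> 0"
  shows "has_bochner_integral lborel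
     (\<lambda>X::complex^'c^'t. C0 * (\<Prod>j\<in>UNIV. exp (- (Re (qf A (col j X)) + (norm (col j Y - H *v col j X))\<^sup>2 / s))))
     (C0 * (\<Prod>j\<in>UNIV. exp (- Re (qf (Km A H s) (col j Y))) * (pi ^ CARD('t) / Re (det (Bm A H s)))))"
proof (rule has_bochner_integral_nn_integral)
  have dB: "Re (det (Bm A H s)) > 0" by (rule herm_pd_det(1)[OF B_pd[OF A s]])
  show "(\<lambda>X::complex^'c^'t. C0 * (\<Prod>j\<in>UNIV. exp (- (Re (qf A (col j X)) + (norm (col j Y - H *v col j X))\<^sup>2 / s)))) \<in> borel_measurable lborel"
    by measurable
  show "AE X in lborel. 0 \<le> C0 * (\<Prod>j\<in>UNIV. exp (- (Re (qf A (col j X)) + (norm (col j Y - H *v col j X))\<^sup>2 / s)))"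
    using C0 by (intro AE_I2 mult_nonneg_nonneg prod_nonneg) auto
  show "0 \<le> C0 * (\<Prod>j\<in>UNIV. exp (- Re (qf (Km A H s) (col j Y))) * (pi ^ CARD('t) / Re (det (Bm A H s))))"
    using C0 dB by (auto intro!: prod_nonneg mult_nonneg_nonneg)
  have "(\<integral>\<^sup>+X. ennreal (C0 * (\<Prod>j\<in>UNIV. exp (- (Re (qf A (col j X)) + (norm (col j Y - H *v col j X))\<^sup>2 / s)))) \<partial>(lborel::(complex^'c^'t) measure))
      = (\<integral>\<^sup>+X. ennreal C0 * (\<Prod>j\<in>UNIV. ennreal (exp (- (Re (qf A (col j X)) + (norm (col j Y - H *v col j X))\<^sup>2 / s)))) \<partial>(lborel::(complex^'c^'t) measure))"
    using C0 by (intro nn_integral_cong) (simp add: ennreal_mult prod_ennreal prod_nonneg)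
  also have "\<dots> = ennreal C0 * (\<integral>\<^sup>+X. (\<Prod>j\<in>UNIV. ennreal (exp (- (Re (qf A (col j X)) + (norm (col j Y - H *v col j X))\<^sup>2 / s)))) \<partial>(lborel::(complex^'c^'t) measure))"
    by (rule nn_integral_cmult) measurable
  also have "(\<integral>\<^sup>+X. (\<Prod>j\<in>UNIV. ennreal (exp (- (Re (qf A (col j X)) + (norm (col j Y - H *v col j X))\<^sup>2 / s)))) \<partial>(lborel::(complex^'c^'t) measure))
      = (\<Prod>j\<in>UNIV. \<integral>\<^sup>+x. ennreal (exp (- (Re (qf A x) + (norm (col j Y - H *v x))\<^sup>2 / s))) \<partial>lborel)"
    by (rule prod_cols_nn[where f="\<lambda>j x. ennreal (exp (- (Re (qf A x) + (norm (col j Y - H *v x))\<^sup>2 / s)))"]) measurable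
  also have "\<dots> = (\<Prod>j\<in>UNIV. ennreal (exp (- Re (qf (Km A H s) (col j Y))) * (pi ^ CARD('t) / Re (det (Bm A H s)))))"
    by (intro prod.cong refl) (rule col_gauss[OF A s])
  also have "ennreal C0 * \<dots> = ennreal (C0 * (\<Prod>j\<in>UNIV. exp (- Re (qf (Km A H s) (col j Y))) * (pi ^ CARD('t) / Re (det (Bm A H s)))))"
    using C0 dB by (simp add: ennreal_mult prod_ennreal prod_nonneg)
  finally show "(\<integral>\<^sup>+X. ennreal (C0 * (\<Prod>j\<in>UNIV. exp (- (Re (qf A (col j X)) + (norm (col j Y - H *v col j X))\<^sup>2 / s)))) \<partial>lborel)
      = ennreal (C0 * (\<Prod>j\<in>UNIV. exp (- Re (qf (Km A H s) (col j Y))) * (pi ^ CARD('t) / Re (det (Bm A H s)))))" .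
qed

lemma cols_gauss:
  fixes M :: "complex^'r::finite^'r"
  assumes M: "herm_pd M" and c: "c \<ge> 0" and d: "d \<ge> 0"
  shows "has_bochner_integral lborel
     (\<lambda>Y::complex^'c::finite^'r. c * (\<Prod>j\<in>UNIV. d * exp (- Re (qf M (col j Y)))))
     (c * (\<Prod>j\<in>(UNIV::'c set). d * (pi ^ CARD('r) / Re (det M))))"
proof (rule has_bochner_integral_nn_integral)
  have dM: "Re (det M) > 0" by (rule herm_pd_det(1)[OF M])
  show "(\<lambda>Y::complex^'c^'r. c * (\<Prod>j\<in>UNIV. d * exp (- Re (qf M (col j Y))))) \<in> borel_measurable lborel"
    by measurable
  show "AE Y in lborel. 0 \<le> c * (\<Prod>j\<in>(UNIV::'c set). d * exp (- Re (qf M (col j Y))))"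
    using c d by (intro AE_I2 mult_nonneg_nonneg prod_nonneg) auto
  show "0 \<le> c * (\<Prod>j\<in>(UNIV::'c set). d * (pi ^ CARD('r) / Re (det M)))"
    using c d dM by (auto intro!: prod_nonneg mult_nonneg_nonneg)
  have "(\<integral>\<^sup>+Y. ennreal (c * (\<Prod>j\<in>UNIV. d * exp (- Re (qf M (col j Y))))) \<partial>(lborel::(complex^'c^'r) measure))
      = (\<integral>\<^sup>+Y. ennreal c * (\<Prod>j\<in>UNIV. ennreal d * ennreal (exp (- Re (qf M (col j Y - 0))))) \<partial>(lborel::(complex^'c^'r) measure))"
    using c d by (intro nn_integral_cong) (simp add: ennreal_mult[symmetric] prod_ennreal prod_nonneg)
  also have "\<dots> = ennreal c * (\<integral>\<^sup>+Y. (\<Prod>j\<in>UNIV. ennreal d * ennreal (exp (- Re (qf M (col j Y - 0))))) \<partial>(lborel::(complex^'c^'r) measure))"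
    by (rule nn_integral_cmult) measurable
  also have "(\<integral>\<^sup>+Y. (\<Prod>j\<in>UNIV. ennreal d * ennreal (exp (- Re (qf M (col j Y - 0))))) \<partial>(lborel::(complex^'c^'r) measure))
      = (\<Prod>j\<in>(UNIV::'c set). \<integral>\<^sup>+y. ennreal d * ennreal (exp (- Re (qf M (y - 0)))) \<partial>lborel)"
    by (rule prod_cols_nn[where f="\<lambda>j y. ennreal d * ennreal (exp (- Re (qf M (y - 0))))"]) measurable
  also have "\<dots> = (\<Prod>j\<in>(UNIV::'c set). ennreal d * ennreal (pi ^ CARD('r) / Re (det M)))"
  proof (intro prod.cong refl)
    have "(\<integral>\<^sup>+y. ennreal d * ennreal (exp (- Re (qf M (y - 0)))) \<partial>lborel) = ennreal d * (\<integral>\<^sup>+y. ennreal (exp (- Re (qf M (y - 0)))) \<partial>lborel)"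
      by (rule nn_integral_cmult) measurable
    then show "(\<integral>\<^sup>+y. ennreal d * ennreal (exp (- Re (qf M (y - 0)))) \<partial>lborel) = ennreal d * ennreal (pi ^ CARD('r) / Re (det M))"
      by (simp only: gauss_nn[OF M])
  qed
  also have "ennreal c * \<dots> = ennreal (c * (\<Prod>j\<in>(UNIV::'c set). d * (pi ^ CARD('r) / Re (det M))))"
    using c d dM by (simp add: ennreal_mult[symmetric] ennreal_power prod_nonneg)
  finally show "(\<integral>\<^sup>+Y. ennreal (c * (\<Prod>j\<in>UNIV. d * exp (- Re (qf M (col j Y))))) \<partial>(lborel::(complex^'c^'r) measure))
      = ennreal (c * (\<Prod>j\<in>(UNIV::'c set). d * (pi ^ CARD('r) / Re (det M))))" .
qed

lemma final_alg:
  fixes N0 \<rho> r P dQ dA dB dK D :: real and nT nR nc :: nat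
  assumes N0: "N0 > 0" and \<rho>: "\<rho> \<ge> 0" and dQ: "dQ > 0" and dA: "dA > 0" and dB: "dB > 0" and dK: "dK > 0"
    and D: "D > 0"
    and rel1: "dB * dK = dA / (N0 * (1 + \<rho>)) ^ nR"
    and rel2: "D * ((N0 * (1 + \<rho>)) ^ nR * dK) = 1"
  shows "(pi powr (- real (nT * nc)) * dQ powr (- real nc) * exp (- r * real nc * P)
           * ((pi * N0) powr (- real (nR * nc))) powr (1 / (1 + \<rho>))) powr (1 + \<rho>)
         * ((pi ^ nT / dB) powr (1 + \<rho>) * (pi ^ nR / ((1 + \<rho>) ^ nR * dK))) ^ nc
       = exp (- r * real nc * P * (1 + \<rho>)) * (dQ * dA) powr (- real nc * (1 + \<rho>)) * D powr (- real nc * \<rho>)"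
    (is "?L = ?R")
proof -
  define p where "p = 1 + \<rho>"
  have p: "p > 0" using \<rho> by (simp add: p_def)
  have lnB: "ln dB = ln dA - real nR * (ln N0 + ln p) - ln dK"
  proof -
    have "ln (dB * dK) = ln (dA / (N0 * p) ^ nR)" using rel1 by (simp add: p_def)
    then show ?thesis using dB dK dA N0 p by (simp add: ln_mult ln_div ln_realpow)
  qed
  have lnD: "ln D = - real nR * (ln N0 + ln p) - ln dK"
  proof -
    have "ln (D * ((N0 * p) ^ nR * dK)) = 0" using rel2 by (simp add: p_def)
    then show ?thesis using D dK N0 p by (simp add: ln_mult ln_realpow algebra_simps)
  qed
  have Lpos: "?L > 0" using N0 dQ dB dK p by (simp add: p_def[symmetric])
  have Rpos: "?R > 0" using dQ dA D by simp
  have "ln ?L = p * (- real (nT * nc) * ln pi - real nc * ln dQ - r * real nc * P)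
                 - real (nR * nc) * (ln pi + ln N0)
               + real nc * (p * (real nT * ln pi - ln dB) + real nR * ln pi - (real nR * ln p + ln dK))"
    using N0 dQ dB dK p pi_gt_zero
    by (simp add: p_def[symmetric] ln_mult ln_div ln_realpow ln_prod ln_powr powr_mult powr_powr exp_powr' ln_exp algebra_simps)
  also have "\<dots> = ln ?R"
    using dQ dA D p unfolding lnB
    by (simp add: p_def[symmetric] ln_mult lnD field_simps) (simp add: p_def algebra_simps)
  finally have "ln ?L = ln ?R" .
  then show ?thesis using Lpos Rpos by simp
qed

lemma herm_pd_scale: "c > 0 \<Longrightarrow> herm_pd M \<Longrightarrow> herm_pd (c *\<^sub>R M)"
  by (simp add: herm_pd_qf qf_scaleR hermitian_def cadj_scaleR)

lemma QA_eq:
  assumes "herm_pd Q"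
  shows "Q ** (matrix_inv Q - r *\<^sub>R mat 1) = mat 1 - r *\<^sub>R (Q::complex^'t::finite^'t)"
proof -
  note qi = matrix_inv_props[OF herm_pd_invertible[OF assms]]
  have "(Q ** (matrix_inv Q - r *\<^sub>R mat 1)) *v v = (mat 1 - r *\<^sub>R Q) *v v" for v
    by (simp add: matrix_vector_mul_assoc[symmetric] matrix_vector_mult_diff_rdistrib
        matrix_vector_mult_diff_distrib mv_scaleR_left mv_scaleR_right matrix_vector_mul_assoc qi)
  then show ?thesis by (simp add: matrix_eq)
qed

lemma inner_value:
  fixes N0 P \<rho> r :: real and Q :: "complex^'t::finite^'t" and H :: "complex^'t^'r::finite"
  assumes N0: "N0 > 0" and \<rho>: "0 \<le> \<rho>" and Q: "herm_pd Q" and r: "r \<ge> 0" and IrQ: "herm_pd (mat 1 - r *\<^sub>R Q)"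
  shows "integral\<^sup>L lborel (\<lambda>Y::complex^'c::finite^'r. (integral\<^sup>L lborel (\<lambda>X::complex^'c^'t.
            pX Q X * exp (r * (Re (trace (X ** cadj X)) - real CARD('c) * P)) * pYXH N0 Y X H powr (1 / (1 + \<rho>)))) powr (1 + \<rho>))
     = exp (- r * real CARD('c) * P * (1 + \<rho>)) * Re (det (mat 1 - r *\<^sub>R Q)) powr (- real CARD('c) * (1 + \<rho>))
       * Re (det (mat 1 + (1 / (N0 * (1 + \<rho>))) *\<^sub>R (H ** matrix_inv (matrix_inv Q - r *\<^sub>R mat 1) ** cadj H))) powr (- real CARD('c) * \<rho>)"
proof -
  define A where "A = matrix_inv Q - r *\<^sub>R mat 1"
  define s where "s = N0 * (1 + \<rho>)"
  define p where "p = 1 + \<rho>"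
  have s: "s > 0" using N0 \<rho> by (simp add: s_def)
  have p: "p > 0" using \<rho> by (simp add: p_def)
  have Apd: "herm_pd A" unfolding A_def by (rule A_pd[OF Q r IrQ])
  define K where "K = Km A H s"
  define B where "B = Bm A H s"
  have Kpd: "herm_pd K" unfolding K_def by (rule K_pd[OF Apd s])
  have Bpd: "herm_pd B" unfolding B_def by (rule B_pd[OF Apd s])
  define dQ where "dQ = Re (det Q)"
  define dA where "dA = Re (det A)"
  define dB where "dB = Re (det B)"
  define dK where "dK = Re (det K)"
  have dQ: "dQ > 0" "det Q = complex_of_real dQ" using herm_pd_det[OF Q] by (simp_all add: dQ_def)
  have dA: "dA > 0" "det A = complex_of_real dA" using herm_pd_det[OF Apd] by (simp_all add: dA_def)
  have dB: "dB > 0" "det B = complex_of_real dB" using herm_pd_det[OF Bpd] by (simp_all add: dB_def)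
  have dK: "dK > 0" "det K = complex_of_real dK" using herm_pd_det[OF Kpd] by (simp_all add: dK_def)
  define C0 where "C0 = pi powr (- real (CARD('t) * CARD('c))) * Re (det Q) powr (- real CARD('c)) * exp (- r * real CARD('c) * P)
        * ((pi * N0) powr (- real (CARD('r) * CARD('c)))) powr (1 / (1 + \<rho>))"
  have C0: "C0 > 0" unfolding C0_def using dQ(1) N0
    by (intro mult_pos_pos exp_gt_zero) (simp_all add: dQ_def[symmetric])
  define c3 where "c3 = pi ^ CARD('t) / dB"
  have c3: "c3 > 0" using dB by (simp add: c3_def)
  have step1: "integral\<^sup>L lborel (\<lambda>X::complex^'c^'t. pX Q X * exp (r * (Re (trace (X ** cadj X)) - real CARD('c) * P)) * pYXH N0 Y X H powr (1 / (1 + \<rho>)))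
      = C0 * (\<Prod>j\<in>UNIV. exp (- Re (qf K (col j Y))) * c3)" for Y :: "complex^'c^'r"
  proof -
    have eq: "(\<lambda>X::complex^'c^'t. pX Q X * exp (r * (Re (trace (X ** cadj X)) - real CARD('c) * P)) * pYXH N0 Y X H powr (1 / (1 + \<rho>)))
        = (\<lambda>X. C0 * (\<Prod>j\<in>UNIV. exp (- (Re (qf A (col j X)) + (norm (col j Y - H *v col j X))\<^sup>2 / s))))"
      by (rule ext) (simp only: integrand_eq[OF N0 \<rho>] C0_def A_def s_def)
    have hb: "has_bochner_integral lborel (\<lambda>X::complex^'c^'t. C0 * (\<Prod>j\<in>UNIV. exp (- (Re (qf A (col j X)) + (norm (col j Y - H *v col j X))\<^sup>2 / s))))
       (C0 * (\<Prod>j\<in>UNIV. exp (- Re (qf (Km A H s) (col j Y))) * (pi ^ CARD('t) / Re (det (Bm A H s)))))"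
      by (rule X_integral[OF Apd s]) (use C0 in simp)
    have "integral\<^sup>L lborel (\<lambda>X::complex^'c^'t. pX Q X * exp (r * (Re (trace (X ** cadj X)) - real CARD('c) * P)) * pYXH N0 Y X H powr (1 / (1 + \<rho>)))
       = C0 * (\<Prod>j\<in>UNIV. exp (- Re (qf (Km A H s) (col j Y))) * (pi ^ CARD('t) / Re (det (Bm A H s))))"
      unfolding eq by (rule has_bochner_integral_integral_eq[OF hb])
    then show ?thesis by (simp only: K_def[symmetric] B_def[symmetric] dB_def[symmetric] c3_def[symmetric])
  qed
  have step2: "(C0 * (\<Prod>j\<in>UNIV. exp (- Re (qf K (col j Y))) * c3)) powr p
      = C0 powr p * (\<Prod>j\<in>UNIV. c3 powr p * exp (- Re (qf (p *\<^sub>R K) (col j Y))))" for Y :: "complex^'c^'r"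
  proof -
    have "(C0 * (\<Prod>j\<in>UNIV. exp (- Re (qf K (col j Y))) * c3)) powr p = C0 powr p * (\<Prod>j\<in>UNIV. exp (- Re (qf K (col j Y))) * c3) powr p"
      using C0 c3 by (simp add: powr_mult prod_nonneg)
    also have "(\<Prod>j\<in>UNIV. exp (- Re (qf K (col j Y))) * c3) powr p = (\<Prod>j\<in>UNIV. (exp (- Re (qf K (col j Y))) * c3) powr p)"
      by (rule prod_powr_distrib)
    also have "\<dots> = (\<Prod>j\<in>UNIV. c3 powr p * exp (- Re (qf (p *\<^sub>R K) (col j Y))))"
      using c3 by (intro prod.cong refl) (simp add: powr_mult exp_powr' qf_scaleR mult.commute)
    finally show ?thesis .
  qed
  have step3: "integral\<^sup>L lborel (\<lambda>Y::complex^'c^'r. C0 powr p * (\<Prod>j\<in>UNIV. c3 powr p * exp (- Re (qf (p *\<^sub>R K) (col j Y)))))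
      = C0 powr p * (\<Prod>j\<in>(UNIV::'c set). c3 powr p * (pi ^ CARD('r) / Re (det (p *\<^sub>R K))))"
  proof -
    have "has_bochner_integral lborel (\<lambda>Y::complex^'c^'r. C0 powr p * (\<Prod>j\<in>UNIV. c3 powr p * exp (- Re (qf (p *\<^sub>R K) (col j Y)))))
         (C0 powr p * (\<Prod>j\<in>(UNIV::'c set). c3 powr p * (pi ^ CARD('r) / Re (det (p *\<^sub>R K)))))"
      by (rule cols_gauss[OF herm_pd_scale[OF p Kpd]]) simp_all
    then show ?thesis by (rule has_bochner_integral_integral_eq)
  qed
  have step4: "Re (det (p *\<^sub>R K)) = p ^ CARD('r) * dK"
    by (simp add: det_scaleR dK(2))
  have step5: "dB * dK = dA / s ^ CARD('r)"
    using det_rel[OF Apd s, of H] by (simp add: dA_def dB_def dK_def B_def K_def)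
  define W where "W = mat 1 - (1/s) *\<^sub>R (H ** matrix_inv B ** cadj H)"
  define Dm where "Dm = mat 1 + (1/s) *\<^sub>R (H ** matrix_inv A ** cadj H)"
  have KW: "K = (1/s) *\<^sub>R W" by (simp add: K_def Km_def W_def B_def)
  have detW: "det W = complex_of_real (s ^ CARD('r) * dK)"
  proof -
    have "det K = complex_of_real ((1/s) ^ CARD('r)) * det W" by (simp add: KW det_scaleR)
    then show ?thesis using s dK(2) by (simp add: field_simps)
  qed
  have "det Dm * det W = 1"
    using arg_cong[OF woodbury[OF Apd s, of H], of det] by (simp add: det_mul Dm_def W_def B_def)
  then have "Re (det Dm * complex_of_real (s ^ CARD('r) * dK)) = 1" unfolding detW by simp
  then have step6: "Re (det Dm) * (s ^ CARD('r) * dK) = 1" by simp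
  have swp: "s ^ CARD('r) * dK > 0" using s dK(1) by simp
  have DmPos: "Re (det Dm) > 0"
  proof (rule ccontr)
    assume "\<not> Re (det Dm) > 0"
    then have "Re (det Dm) * (s ^ CARD('r) * dK) \<le> 0" using swp by (simp add: mult_nonpos_nonneg)
    then show False using step6 by simp
  qed
  have step7: "dQ * dA = Re (det (mat 1 - r *\<^sub>R Q))"
  proof -
    have "det (mat 1 - r *\<^sub>R Q) = det Q * det A" by (simp add: A_def QA_eq[OF Q, symmetric] det_mul)
    then show ?thesis by (simp add: dQ(2) dA(2))
  qed
  have "integral\<^sup>L lborel (\<lambda>Y::complex^'c^'r. (integral\<^sup>L lborel (\<lambda>X::complex^'c^'t.
            pX Q X * exp (r * (Re (trace (X ** cadj X)) - real CARD('c) * P)) * pYXH N0 Y X H powr (1 / (1 + \<rho>)))) powr (1 + \<rho>))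
      = integral\<^sup>L lborel (\<lambda>Y::complex^'c^'r. C0 powr p * (\<Prod>j\<in>UNIV. c3 powr p * exp (- Re (qf (p *\<^sub>R K) (col j Y)))))"
    by (simp only: step1 p_def step2[unfolded p_def])
  also have "\<dots> = C0 powr p * (\<Prod>j\<in>(UNIV::'c set). c3 powr p * (pi ^ CARD('r) / (p ^ CARD('r) * dK)))"
    by (simp only: step3 step4)
  also have "\<dots> = C0 powr p * (c3 powr p * (pi ^ CARD('r) / (p ^ CARD('r) * dK))) ^ CARD('c)"
    by (simp only: prod_constant)
  also have "\<dots> = exp (- r * real CARD('c) * P * (1 + \<rho>)) * (dQ * dA) powr (- real CARD('c) * (1 + \<rho>)) * Re (det Dm) powr (- real CARD('c) * \<rho>)"
    unfolding C0_def c3_def p_def dQ_def[symmetric]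
    by (rule final_alg[OF N0 \<rho> dQ(1) dA(1) dB(1) dK(1) DmPos]) (use step5 step6 in \<open>simp_all add: s_def\<close>)
  finally show ?thesis by (simp add: step7 Dm_def s_def A_def)
qed

lemma norm_vec_sq: "(norm (x::'a::real_normed_vector^'n::finite))\<^sup>2 = (\<Sum>i\<in>UNIV. (norm (x$i))\<^sup>2)"
  by (simp add: norm_vec_def L2_set_def sum_nonneg)

lemma H0_law_prob: "prob_space (H0_law :: (complex^'t::finite^'r::finite) measure)"
proof (rule prob_spaceI)
  have eqn: "(\<Sum>i\<in>UNIV. \<Sum>j\<in>UNIV. (cmod (H0 $ i $ j))\<^sup>2) = (norm H0)\<^sup>2" for H0 :: "complex^'t^'r"
    by (simp add: norm_vec_sq)
  have "emeasure (H0_law :: (complex^'t^'r) measure) (space H0_law)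
      = (\<integral>\<^sup>+H0. ennreal (pi powr (- real (CARD('r) * CARD('t))) * exp (- (norm H0)\<^sup>2)) \<partial>(lborel::(complex^'t^'r) measure))"
    unfolding H0_law_def eqn by (simp add: emeasure_density)
  also have "\<dots> = ennreal (pi powr (- real (CARD('r) * CARD('t)))) * (\<integral>\<^sup>+H0. ennreal (exp (- (norm H0)\<^sup>2)) \<partial>(lborel::(complex^'t^'r) measure))"
    by (subst nn_integral_cmult[symmetric]) (simp_all add: ennreal_mult)
  also have "\<dots> = ennreal (pi powr (- real (CARD('r) * CARD('t))) * sqrt pi ^ (CARD('r) * (CARD('t) * 2)))"
    by (simp add: gauss_norm_nn ennreal_mult)
  also have "sqrt pi ^ (CARD('r) * (CARD('t) * 2)) = pi powr (real (CARD('r) * CARD('t)))"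
  proof -
    have e: "CARD('r) * (CARD('t) * 2) = 2 * (CARD('r) * CARD('t))" by simp
    have "sqrt pi ^ (CARD('r) * (CARD('t) * 2)) = (sqrt pi ^ 2) ^ (CARD('r) * CARD('t))"
      by (simp only: e power_mult)
    also have "\<dots> = pi ^ (CARD('r) * CARD('t))" by simp
    also have "\<dots> = pi powr (real (CARD('r) * CARD('t)))" by (rule powr_realpow[symmetric]) simp
    finally show ?thesis .
  qed
  also have "pi powr (- real (CARD('r) * CARD('t))) * pi powr (real (CARD('r) * CARD('t))) = 1"
    by (simp add: powr_add[symmetric])
  finally show "emeasure (H0_law :: (complex^'t^'r) measure) (space H0_law) = 1" by simp
qed

lemma meas_sandwich[measurable]: "(\<lambda>H0. (A::complex^'r::finite^'r) ** H0 ** (B::complex^'t::finite^'t)) \<in> borel_measurable borel"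
  unfolding matrix_matrix_mult_def by (intro borel_measurable_continuous_onI continuous_intros)

lemma H_law_prob: "prob_space (H_law PhiR PhiT :: (complex^'t::finite^'r::finite) measure)"
proof -
  interpret P: prob_space "H0_law :: (complex^'t^'r) measure" by (rule H0_law_prob)
  have m: "(\<lambda>H0::complex^'t^'r. pd_sqrt PhiR ** H0 ** pd_sqrt PhiT) \<in> measurable H0_law lborel"
    by (simp add: H0_law_def measurable_cong_sets[OF sets_density refl])
  show ?thesis unfolding H_law_def by (rule P.prob_space_distr[OF m])
qed

lemma sets_H_law[simp]: "sets (H_law PhiR PhiT) = sets borel"
  by (simp add: H_law_def)

lemma cont_D: "continuous_on UNIV (\<lambda>H::complex^'t::finite^'r::finite. Re (det (mat 1 + c *\<^sub>R (H ** M ** cadj H))))"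
  unfolding det_def matrix_matrix_mult_def cadj_def by (intro continuous_intros)

lemma D_ge1:
  fixes A :: "complex^'t::finite^'t" and H :: "complex^'t^'r::finite"
  assumes A: "herm_pd A" and s: "s > 0"
  shows "Re (det (mat 1 + (1/s) *\<^sub>R (H ** matrix_inv A ** cadj H))) \<ge> 1"
proof -
  define K where "K = Km A H s"
  define B where "B = Bm A H s"
  have Kpd: "herm_pd K" unfolding K_def by (rule K_pd[OF A s])
  have Bpd: "herm_pd B" unfolding B_def by (rule B_pd[OF A s])
  define dA where "dA = Re (det A)"
  define dB where "dB = Re (det B)"
  define dK where "dK = Re (det K)"
  have dA: "dA > 0" using herm_pd_det[OF A] by (simp_all add: dA_def)
  have dB: "dB > 0" using herm_pd_det[OF Bpd] by (simp_all add: dB_def)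
  have dK: "dK > 0" "det K = complex_of_real dK" using herm_pd_det[OF Kpd] by (simp_all add: dK_def)
  have rel: "dB * dK = dA / s ^ CARD('r)"
    using det_rel[OF A s, of H] by (simp add: dA_def dB_def dK_def B_def K_def)
  define W where "W = mat 1 - (1/s) *\<^sub>R (H ** matrix_inv B ** cadj H)"
  define Dm where "Dm = mat 1 + (1/s) *\<^sub>R (H ** matrix_inv A ** cadj H)"
  have KW: "K = (1/s) *\<^sub>R W" by (simp add: K_def Km_def W_def B_def)
  have detW: "det W = complex_of_real (s ^ CARD('r) * dK)"
  proof -
    have "det K = complex_of_real ((1/s) ^ CARD('r)) * det W" by (simp add: KW det_scaleR)
    then show ?thesis using s dK(2) by (simp add: field_simps)
  qed
  have "det Dm * det W = 1"
    using arg_cong[OF woodbury[OF A s, of H], of det] by (simp add: det_mul Dm_def W_def B_def)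
  then have "Re (det Dm * complex_of_real (s ^ CARD('r) * dK)) = 1" unfolding detW by simp
  then have step6: "Re (det Dm) * (s ^ CARD('r) * dK) = 1" by simp
  have DmEq: "Re (det Dm) = dB / dA"
  proof -
    have "Re (det Dm) = 1 / (s ^ CARD('r) * dK)" using step6 s dK(1) by (simp add: field_simps)
    also have "\<dots> = dB / dA" using rel dK(1) dA s by (simp add: field_simps)
    finally show ?thesis .
  qed
  have "ennreal (pi ^ CARD('t) / dB) \<le> ennreal (pi ^ CARD('t) / dA)"
  proof -
    have "(\<integral>\<^sup>+x. ennreal (exp (- Re (qf B (x - 0)))) \<partial>lborel) \<le> (\<integral>\<^sup>+x. ennreal (exp (- Re (qf A (x - 0)))) \<partial>lborel)"
      using s by (intro nn_integral_mono) (simp add: B_def Bm_qf)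
    then show ?thesis by (simp only: gauss_nn[OF Bpd] gauss_nn[OF A] dB_def dA_def)
  qed
  then have "pi ^ CARD('t) / dB \<le> pi ^ CARD('t) / dA" using dA by (simp add: ennreal_le_iff)
  then have "dA \<le> dB" using dA dB by (simp add: field_simps)
  then have "Re (det Dm) \<ge> 1" using DmEq dA by (simp add: le_divide_eq_1_pos)
  then show ?thesis unfolding Dm_def .
qed

theorem proposition1:
  fixes N0 P \<rho> r :: real
    and Q :: "complex^'t^'t" and PhiT :: "complex^'t^'t" and PhiR :: "complex^'r^'r"
  assumes "N0 > 0" and "P > 0" and "0 \<le> \<rho>" and "\<rho> \<le> 1"
    and "herm_pd Q" and "Re (trace Q) \<le> P"
    and "r \<ge> 0" and "herm_pd (mat 1 - r *\<^sub>R Q)"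
    and "herm_pd PhiT" and "herm_pd PhiR"
  shows "E0 N0 P \<rho> r Q PhiR PhiT TYPE('c::finite) =
     r * P * (1 + \<rho>) + (1 + \<rho>) * ln (Re (det (mat 1 - r *\<^sub>R Q)))
     - (1 / real CARD('c)) * ln (\<integral>H.
          Re (det (mat 1 + (1 / (N0 * (1 + \<rho>))) *\<^sub>R
                 (H ** matrix_inv (matrix_inv Q - r *\<^sub>R mat 1) ** cadj H)))
            powr (- real CARD('c) * \<rho>) \<partial>(H_law PhiR PhiT))"
proof -
  note N0 = assms(1) and \<rho> = assms(3) and Q = assms(5) and r = assms(7) and IrQ = assms(8)
  define g where "g H = Re (det (mat 1 + (1 / (N0 * (1 + \<rho>))) *\<^sub>R
                 (H ** matrix_inv (matrix_inv Q - r *\<^sub>R mat 1) ** cadj H))) powr (- real CARD('c) * \<rho>)"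
    for H :: "complex^'t^'r"
  define \<Phi> where "\<Phi> = exp (- r * real CARD('c) * P * (1 + \<rho>)) * Re (det (mat 1 - r *\<^sub>R Q)) powr (- real CARD('c) * (1 + \<rho>))"
  define G where "G = integral\<^sup>L (H_law PhiR PhiT) g"
  have Apd: "herm_pd (matrix_inv Q - r *\<^sub>R mat 1)" by (rule A_pd[OF Q r IrQ])
  have s: "N0 * (1 + \<rho>) > 0" using N0 \<rho> by simp
  have dI: "Re (det (mat 1 - r *\<^sub>R Q)) > 0" by (rule herm_pd_det(1)[OF IrQ])
  have Phi: "\<Phi> > 0" using dI by (simp add: \<Phi>_def)
  have inner: "integral\<^sup>L lborel (\<lambda>Y::complex^'c::finite^'r. (integral\<^sup>L lborel (\<lambda>X::complex^'c^'t.
            pX Q X * exp (r * (Re (trace (X ** cadj X)) - real CARD('c) * P)) * pYXH N0 Y X H powr (1 / (1 + \<rho>)))) powr (1 + \<rho>))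
     = \<Phi> * g H" for H
    unfolding \<Phi>_def g_def by (rule inner_value[OF N0 \<rho> Q r IrQ])
  have E0eq: "E0 N0 P \<rho> r Q PhiR PhiT TYPE('c) = - (1 / real CARD('c)) * ln (\<Phi> * G)"
    unfolding E0_def inner G_def by simp
  interpret HP: prob_space "H_law PhiR PhiT :: (complex^'t^'r) measure" by (rule H_law_prob)
  have D1: "Re (det (mat 1 + (1 / (N0 * (1 + \<rho>))) *\<^sub>R (H ** matrix_inv (matrix_inv Q - r *\<^sub>R mat 1) ** cadj H))) \<ge> 1" for H :: "complex^'t^'r"
    by (rule D_ge1[OF Apd s])
  have gpos: "g H > 0" for H
    using D1[of H] by (simp add: g_def)
  have gle: "g H \<le> 1" for H
  proof -
    have "g H \<le> Re (det (mat 1 + (1 / (N0 * (1 + \<rho>))) *\<^sub>R (H ** matrix_inv (matrix_inv Q - r *\<^sub>R mat 1) ** cadj H))) powr 0"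
      unfolding g_def using D1[of H] \<rho> by (intro powr_mono) auto
    then show ?thesis using D1[of H] by simp
  qed
  have gm: "g \<in> borel_measurable (H_law PhiR PhiT)"
  proof -
    have "(\<lambda>H::complex^'t^'r. Re (det (mat 1 + (1 / (N0 * (1 + \<rho>))) *\<^sub>R (H ** matrix_inv (matrix_inv Q - r *\<^sub>R mat 1) ** cadj H)))) \<in> borel_measurable borel"
      by (rule borel_measurable_continuous_onI[OF cont_D])
    then have "g \<in> borel_measurable borel" unfolding g_def[abs_def] by measurable
    then show ?thesis by (simp add: measurable_cong_sets[OF sets_H_law refl])
  qed
  have gint: "integrable (H_law PhiR PhiT) g"
  proof (rule HP.integrable_const_bound[where B=1])
    show "AE x in H_law PhiR PhiT. norm (g x) \<le> 1"
      by (intro AE_I2) (metis abs_of_pos gle gpos real_norm_def)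
  qed (rule gm)
  have Gnn: "G \<ge> 0" unfolding G_def using gpos by (simp add: less_imp_le)
  have "G \<noteq> 0"
  proof
    assume "G = 0"
    then have AE0: "AE H in H_law PhiR PhiT. g H = 0"
      using integral_nonneg_eq_0_iff_AE[OF gint] gpos unfolding G_def by (simp add: less_imp_le)
    have ne: "g H \<noteq> 0" for H using gpos[of H] by simp
    have "AE H in H_law PhiR PhiT. False"
      using AE0 by (rule AE_mp) (intro AE_I2 impI, simp add: ne)
    then show False by (simp add: HP.AE_False)
  qed
  then have G: "G > 0" using Gnn by simp
  have "ln (\<Phi> * G) = - r * real CARD('c) * P * (1 + \<rho>) + (- real CARD('c) * (1 + \<rho>)) * ln (Re (det (mat 1 - r *\<^sub>R Q))) + ln G"
    using Phi G dI by (simp add: ln_mult \<Phi>_def)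
  then show ?thesis
    unfolding E0eq G_def[symmetric] g_def[symmetric]
    by (simp add: field_simps)
qed

end
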